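(* Let $\mathcal{B}$ be a central simple complex algebra, let $\mathcal{B}_{\mathbb{R}}$ be $\mathcal{B}$ regarded as a real algebra, let $G$ be an abelian group and $\Gamma:\mathcal{B}_{\mathbb{R}}=\bigoplus_{g\in G}(\mathcal{B}_{\mathbb{R}})_g$ a $G$-grading of the real algebra $\mathcal{B}_{\mathbb{R}}$. Then either (1) the induced grading on the centroid $C(\mathcal{B}_{\mathbb{R}})=\mathbb{C}1$ is trivial, in which case every $(\mathcal{B}_{\mathbb{R}})_g$ is a complex subspace and $\Gamma$ is a $G$-grading of the complex algebra $\mathcal{B}$; or (2) there is an element $h\in G$ of order $2$ with $C(\mathcal{B}_{\mathbb{R}})_e=\mathbb{R}1$ and $C(\mathcal{B}_{\mathbb{R}})_h=\mathbb{R}\mathbf{i}$ (where $\mathbf{i}$ denotes $x\mapsto\mathbf{i}x$), $\mathcal{B}_{\mathbb{R}}$ is $G$-graded-central-simple, and, with $H=\langle h\rangle$ and $\pi:G\to G/H$ the projection, there exist a central simple $G/H$-graded real algebra $\mathcal{A}$ and $\tau\in\mathrm{Z}^2_{\mathrm{sym}}(G,\mathbb{R}^\times)$ such that $\mathcal{B}_{\mathbb{R}}\simeq_G L^\tau_\pi(\mathcal{A})$; moreover, $\mathcal{A}$ is a real form of $\mathcal{B}$, i.e. $\mathcal{B}\simeq\mathcal{A}\otimes_{\mathbb{R}}\mathbb{C}$ as complex algebras.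
   Context: Algebras are arbitrary (nonassociative) algebras. Central simple: simple with centroid equal to the scalars. Centroid $C(\mathcal{A})=\{c\in\mathrm{End}(\mathcal{A}):c(xy)=c(x)y=xc(y)\}$, with $C(\mathcal{A})_g=\{c:c\mathcal{A}_{g'}\subseteq\mathcal{A}_{gg'}\ \forall g'\}$; the grading on $\mathcal{B}_{\mathbb{R}}$ induces $C(\mathcal{B}_{\mathbb{R}})=\bigoplus_g C(\mathcal{B}_{\mathbb{R}})_g$, and "trivial" means $C=C_e$. Graded-central-simple: $\mathcal{A}^2=\mathcal{A}$, no proper nonzero graded ideals, $C(\mathcal{A})_e$ equal to the scalars. $\mathrm{Z}^2_{\mathrm{sym}}(G,\mathbb{R}^\times)$: symmetric $2$-cocycles $G\times G\to\mathbb{R}^\times$. Loop algebra $L_\pi(\mathcal{A})=\bigoplus_{g\in G}\mathcal{A}_{\pi(g)}\otimes g\subseteq\mathcal{A}\otimes_{\mathbb{R}}\mathbb{R}G$, $G$-graded; $L^\tau_\pi(\mathcal{A})$ is its $\tau$-twist, i.e. the same graded space with multiplication $x*y=\tau(g_1,g_2)xy$ for homogeneous $x,y$ of degrees $g_1,g_2$. $\simeq_G$ denotes graded isomorphism. *)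

theory Defs
  imports Complex_Main
begin

text \<open>A complex vector space is a real vector space with a real-linear J, J(J x) = -x
(J = multiplication by i). The abelian group G is a type 'g of class ab_group_add
(written additively, identity 0).\<close>

definition ralg :: "'b::real_vector set \<Rightarrow> ('b \<Rightarrow> 'b \<Rightarrow> 'b) \<Rightarrow> bool" where
  "ralg S m \<longleftrightarrow> subspace S \<and> (\<forall>x\<in>S. \<forall>y\<in>S. m x y \<in> S)
     \<and> (\<forall>x\<in>S. \<forall>y\<in>S. \<forall>z\<in>S. m (x + y) z = m x z + m y z \<and> m z (x + y) = m z x + m z y)
     \<and> (\<forall>r. \<forall>x\<in>S. \<forall>y\<in>S. m (r *\<^sub>R x) y = r *\<^sub>R m x y \<and> m x (r *\<^sub>R y) = r *\<^sub>R m x y)"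

definition rideal :: "'b::real_vector set \<Rightarrow> ('b \<Rightarrow> 'b \<Rightarrow> 'b) \<Rightarrow> 'b set \<Rightarrow> bool" where
  "rideal S m I \<longleftrightarrow> subspace I \<and> I \<subseteq> S \<and> (\<forall>x\<in>S. \<forall>y\<in>I. m x y \<in> I \<and> m y x \<in> I)"

definition rsimple :: "'b::real_vector set \<Rightarrow> ('b \<Rightarrow> 'b \<Rightarrow> 'b) \<Rightarrow> bool" where
  "rsimple S m \<longleftrightarrow> (\<exists>x\<in>S. \<exists>y\<in>S. m x y \<noteq> 0) \<and> (\<forall>I. rideal S m I \<longrightarrow> I = {0} \<or> I = S)"

definition lin_on :: "'b::real_vector set \<Rightarrow> ('b \<Rightarrow> 'b) \<Rightarrow> bool" where
  "lin_on S c \<longleftrightarrow> (\<forall>x\<in>S. c x \<in> S) \<and> (\<forall>x\<in>S. \<forall>y\<in>S. c (x + y) = c x + c y)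
     \<and> (\<forall>r. \<forall>x\<in>S. c (r *\<^sub>R x) = r *\<^sub>R c x)"

definition rcentroid :: "'b::real_vector set \<Rightarrow> ('b \<Rightarrow> 'b \<Rightarrow> 'b) \<Rightarrow> ('b \<Rightarrow> 'b) set" where
  "rcentroid S m = {c. lin_on S c \<and> (\<forall>x\<in>S. \<forall>y\<in>S. c (m x y) = m (c x) y \<and> c (m x y) = m x (c y))}"

definition rcentral_simple :: "'b::real_vector set \<Rightarrow> ('b \<Rightarrow> 'b \<Rightarrow> 'b) \<Rightarrow> bool" where
  "rcentral_simple S m \<longleftrightarrow> ralg S m \<and> rsimple S m
     \<and> (\<forall>c\<in>rcentroid S m. \<exists>r. \<forall>x\<in>S. c x = r *\<^sub>R x)"

definition calg :: "('b::real_vector \<Rightarrow> 'b) \<Rightarrow> ('b \<Rightarrow> 'b \<Rightarrow> 'b) \<Rightarrow> bool" where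
  "calg J m \<longleftrightarrow> linear J \<and> (\<forall>x. J (J x) = - x) \<and> ralg UNIV m
     \<and> (\<forall>x y. m (J x) y = J (m x y) \<and> m x (J y) = J (m x y))"

definition cideal :: "('b::real_vector \<Rightarrow> 'b) \<Rightarrow> ('b \<Rightarrow> 'b \<Rightarrow> 'b) \<Rightarrow> 'b set \<Rightarrow> bool" where
  "cideal J m I \<longleftrightarrow> rideal UNIV m I \<and> J ` I \<subseteq> I"

definition csimple :: "('b::real_vector \<Rightarrow> 'b) \<Rightarrow> ('b \<Rightarrow> 'b \<Rightarrow> 'b) \<Rightarrow> bool" where
  "csimple J m \<longleftrightarrow> (\<exists>x y. m x y \<noteq> 0) \<and> (\<forall>I. cideal J m I \<longrightarrow> I = {0} \<or> I = UNIV)"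

definition ccentroid :: "('b::real_vector \<Rightarrow> 'b) \<Rightarrow> ('b \<Rightarrow> 'b \<Rightarrow> 'b) \<Rightarrow> ('b \<Rightarrow> 'b) set" where
  "ccentroid J m = {c. linear c \<and> (\<forall>x. c (J x) = J (c x))
     \<and> (\<forall>x y. c (m x y) = m (c x) y \<and> c (m x y) = m x (c y))}"

definition ccentral_simple :: "('b::real_vector \<Rightarrow> 'b) \<Rightarrow> ('b \<Rightarrow> 'b \<Rightarrow> 'b) \<Rightarrow> bool" where
  "ccentral_simple J m \<longleftrightarrow> calg J m \<and> csimple J m
     \<and> (\<forall>c\<in>ccentroid J m. \<exists>a b. c = (\<lambda>x. a *\<^sub>R x + b *\<^sub>R J x))"

text \<open>Grading of the real algebra (S, m) by the index set I with operation op
  (op restricted to I is the group operation).\<close>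
definition grading :: "'b::real_vector set \<Rightarrow> ('b \<Rightarrow> 'b \<Rightarrow> 'b) \<Rightarrow> 'i set \<Rightarrow> ('i \<Rightarrow> 'i \<Rightarrow> 'i)
    \<Rightarrow> ('i \<Rightarrow> 'b set) \<Rightarrow> bool" where
  "grading S m I op W \<longleftrightarrow> (\<forall>i\<in>I. subspace (W i) \<and> W i \<subseteq> S)
     \<and> (\<forall>x\<in>S. \<exists>!f. (\<forall>i. i \<notin> I \<longrightarrow> f i = 0) \<and> (\<forall>i\<in>I. f i \<in> W i)
            \<and> finite {i. f i \<noteq> 0} \<and> x = (\<Sum>i\<in>{i. f i \<noteq> 0}. f i))
     \<and> (\<forall>i\<in>I. \<forall>j\<in>I. \<forall>x\<in>W i. \<forall>y\<in>W j. m x y \<in> W (op i j))"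

definition cent_comp :: "('b::real_vector \<Rightarrow> 'b \<Rightarrow> 'b) \<Rightarrow> ('g::ab_group_add \<Rightarrow> 'b set) \<Rightarrow> 'g
    \<Rightarrow> ('b \<Rightarrow> 'b) set" where
  "cent_comp m V g = {c \<in> rcentroid UNIV m. \<forall>g'. c ` V g' \<subseteq> V (g + g')}"

definition graded_ideal :: "('b::real_vector \<Rightarrow> 'b \<Rightarrow> 'b) \<Rightarrow> ('g::ab_group_add \<Rightarrow> 'b set)
    \<Rightarrow> 'b set \<Rightarrow> bool" where
  "graded_ideal m V I \<longleftrightarrow> rideal UNIV m I \<and>
     (\<forall>x\<in>I. \<forall>f. (\<forall>g. f g \<in> V g) \<and> finite {g. f g \<noteq> 0} \<and> x = (\<Sum>g\<in>{g. f g \<noteq> 0}. f g)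
        \<longrightarrow> (\<forall>g. f g \<in> I))"

definition graded_central_simple :: "('b::real_vector \<Rightarrow> 'b \<Rightarrow> 'b) \<Rightarrow> ('g::ab_group_add \<Rightarrow> 'b set)
    \<Rightarrow> bool" where
  "graded_central_simple m V \<longleftrightarrow> span {m x y | x y. True} = UNIV
     \<and> (\<forall>I. graded_ideal m V I \<longrightarrow> I = {0} \<or> I = UNIV)
     \<and> cent_comp m V 0 = {(\<lambda>x. r *\<^sub>R x) | r. True}"

text \<open>The coset g + H of H = <h> = {0, h} (h of order 2), i.e. the projection pi(g).\<close>
definition coset :: "'g::ab_group_add \<Rightarrow> 'g \<Rightarrow> 'g set" where
  "coset h g = {g, g + h}"

definition setadd :: "'g::ab_group_add set \<Rightarrow> 'g set \<Rightarrow> 'g set" where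
  "setadd A B = {a + b | a b. a \<in> A \<and> b \<in> B}"

definition sym_cocycle :: "('g::ab_group_add \<Rightarrow> 'g \<Rightarrow> real) \<Rightarrow> bool" where
  "sym_cocycle \<tau> \<longleftrightarrow> (\<forall>a b. \<tau> a b \<noteq> 0 \<and> \<tau> a b = \<tau> b a)
     \<and> (\<forall>a b c. \<tau> a b * \<tau> (a + b) c = \<tau> b c * \<tau> a (b + c))"

text \<open>Twisted loop algebra: elements of A \<otimes> RG are finitely supported functions G \<Rightarrow> A;
  L_pi(A) consists of those with f g \<in> A_{pi g}.\<close>
definition loop_carrier :: "'g::ab_group_add \<Rightarrow> ('g set \<Rightarrow> 'b::real_vector set) \<Rightarrow> ('g \<Rightarrow> 'b) set" where
  "loop_carrier h W = {f. finite {g. f g \<noteq> 0} \<and> (\<forall>g. f g \<in> W (coset h g))}"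

definition loop_mul :: "('b::real_vector \<Rightarrow> 'b \<Rightarrow> 'b) \<Rightarrow> ('g::ab_group_add \<Rightarrow> 'g \<Rightarrow> real)
    \<Rightarrow> ('g \<Rightarrow> 'b) \<Rightarrow> ('g \<Rightarrow> 'b) \<Rightarrow> ('g \<Rightarrow> 'b)" where
  "loop_mul m \<tau> f1 f2 = (\<lambda>k. \<Sum>g\<in>{g. f1 g \<noteq> 0}. \<tau> g (k - g) *\<^sub>R m (f1 g) (f2 (k - g)))"

definition loop_comp :: "'g::ab_group_add \<Rightarrow> ('g set \<Rightarrow> 'b::real_vector set) \<Rightarrow> 'g \<Rightarrow> ('g \<Rightarrow> 'b) set" where
  "loop_comp h W g = {f \<in> loop_carrier h W. \<forall>k. k \<noteq> g \<longrightarrow> f k = 0}"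

definition graded_iso_loop :: "('b::real_vector \<Rightarrow> 'b \<Rightarrow> 'b) \<Rightarrow> ('g::ab_group_add \<Rightarrow> 'b set) \<Rightarrow> 'g
    \<Rightarrow> ('b \<Rightarrow> 'b \<Rightarrow> 'b) \<Rightarrow> ('g set \<Rightarrow> 'b set) \<Rightarrow> ('g \<Rightarrow> 'g \<Rightarrow> real) \<Rightarrow> ('b \<Rightarrow> 'g \<Rightarrow> 'b) \<Rightarrow> bool" where
  "graded_iso_loop m V h m' W \<tau> \<phi> \<longleftrightarrow> bij_betw \<phi> UNIV (loop_carrier h W)
     \<and> (\<forall>x y. \<phi> (x + y) = (\<lambda>k. \<phi> x k + \<phi> y k))
     \<and> (\<forall>r x. \<phi> (r *\<^sub>R x) = (\<lambda>k. r *\<^sub>R \<phi> x k))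
     \<and> (\<forall>x y. \<phi> (m x y) = loop_mul m' \<tau> (\<phi> x) (\<phi> y))
     \<and> (\<forall>g. \<phi> ` V g = loop_comp h W g)"

text \<open>psi : B \<rightarrow> A \<otimes>_R C (pairs (a1,a2) = a1 + i a2) is an isomorphism of complex algebras.\<close>
definition complexification_iso :: "('b::real_vector \<Rightarrow> 'b) \<Rightarrow> ('b \<Rightarrow> 'b \<Rightarrow> 'b) \<Rightarrow> 'b set
    \<Rightarrow> ('b \<Rightarrow> 'b \<Rightarrow> 'b) \<Rightarrow> ('b \<Rightarrow> 'b \<times> 'b) \<Rightarrow> bool" where
  "complexification_iso J m S m' \<psi> \<longleftrightarrow> bij_betw \<psi> UNIV (S \<times> S)
     \<and> (\<forall>x y. \<psi> (x + y) = (fst (\<psi> x) + fst (\<psi> y), snd (\<psi> x) + snd (\<psi> y)))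
     \<and> (\<forall>r x. \<psi> (r *\<^sub>R x) = (r *\<^sub>R fst (\<psi> x), r *\<^sub>R snd (\<psi> x)))
     \<and> (\<forall>x. \<psi> (J x) = (- snd (\<psi> x), fst (\<psi> x)))
     \<and> (\<forall>x y. \<psi> (m x y) =
          (m' (fst (\<psi> x)) (fst (\<psi> y)) - m' (snd (\<psi> x)) (snd (\<psi> y)),
           m' (fst (\<psi> x)) (snd (\<psi> y)) + m' (snd (\<psi> x)) (fst (\<psi> y))))"

end

theory Submission
  imports Defs
begin

primrec natm :: "nat \<Rightarrow> 'g::ab_group_add \<Rightarrow> 'g" where
  "natm 0 g = 0" | "natm (Suc n) g = g + natm n g"

definition zm :: "int \<Rightarrow> 'g::ab_group_add \<Rightarrow> 'g" where
  "zm j g = (if j \<ge> 0 then natm (nat j) g else - natm (nat (-j)) g)"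

lemma natm_add: "natm (a + b) g = natm a g + natm b g"
  by (induction a) (auto simp: add_ac)

lemma zm_succ: "zm (j + 1) g = zm j g + g"
proof (cases "j \<ge> 0")
  case True
  then have "nat (j+1) = Suc (nat j)" by simp
  then show ?thesis using True by (simp add: zm_def add_ac)
next
  case False
  then have "j \<le> -1" by simp
  show ?thesis
  proof (cases "j = -1")
    case True then show ?thesis by (simp add: zm_def)
  next
    case False
    with \<open>j \<le> -1\<close> have "nat (-j) = Suc (nat (-(j+1)))" by simp
    then show ?thesis using \<open>j \<le> -1\<close> False by (simp add: zm_def algebra_simps)
  qed
qed

lemma zm_pred: "zm (j - 1) g = zm j g - g"
  using zm_succ[of "j - 1" g] by simp

lemma zm_succ': "zm (1 + j) g = g + zm j g"
  using zm_succ[of j g] by (simp add: add.commute)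

lemma zm_0[simp]: "zm 0 g = 0" by (simp add: zm_def)
lemma zm_1[simp]: "zm 1 g = g" by (simp add: zm_def)

lemma zm_add: "zm (i + j) g = zm i g + zm j g"
proof (induction i rule: int_induct[where k=0])
  case base then show ?case by simp
next
  case (step1 i)
  have "zm (i + 1 + j) g = zm (i + j + 1) g" by (simp add: ac_simps)
  also have "\<dots> = zm (i+j) g + g" by (rule zm_succ)
  finally show ?case using step1 zm_succ[of i g] by (simp add: algebra_simps)
next
  case (step2 i)
  have "zm (i - 1 + j) g = zm (i + j - 1) g" by (metis add.commute add_diff_eq)
  also have "\<dots> = zm (i+j) g - g" by (rule zm_pred)
  finally show ?case using step2 by (simp add: zm_pred algebra_simps)
qed

lemma zm_minus: "zm (- i) g = - zm i g"
  using zm_add[of i "-i" g] by (simp add: eq_neg_iff_add_eq_0 add.commute)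

lemma zm_mult: "zm (i * j) g = zm i (zm j g)"
proof (induction i rule: int_induct[where k=0])
  case base then show ?case by simp
next
  case (step1 i) then show ?case by (simp add: distrib_right zm_add zm_succ)
next
  case (step2 i) then show ?case by (simp add: left_diff_distrib zm_pred zm_add[of _ "-j", simplified] zm_minus)
qed

lemma zm_distrib: "zm i (a + b) = zm i a + zm i b"
proof (induction i rule: int_induct[where k=0])
  case base then show ?case by simp
next
  case (step1 i) then show ?case by (simp only: zm_succ) (simp add: algebra_simps)
next
  case (step2 i) then show ?case by (simp only: zm_pred) (simp add: algebra_simps)
qed

definition phom :: "'g::ab_group_add \<Rightarrow> ('g \<times> complex) set \<Rightarrow> bool" where
  "phom h F \<longleftrightarrow> (\<forall>a z b w. (a,z)\<in>F \<longrightarrow> (b,w)\<in>F \<longrightarrow> (a+b, z*w) \<in> F)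
     \<and> (\<forall>a z w. (a,z)\<in>F \<longrightarrow> (a,w)\<in>F \<longrightarrow> z = w) \<and> (h,-1) \<in> F
     \<and> (\<forall>a z. (a,z)\<in>F \<longrightarrow> z \<noteq> 0 \<and> (-a, inverse z) \<in> F)"

lemma phom_zero: assumes "phom h F" shows "(0,1) \<in> F"
proof -
  have "(h,-1) \<in> F" using assms by (simp add: phom_def)
  then have "(-h, inverse (-1)) \<in> F" using assms unfolding phom_def by blast
  with \<open>(h,-1) \<in> F\<close> have "(h + -h, (-1) * inverse (-1)) \<in> F" using assms unfolding phom_def by blast
  then show ?thesis by simp
qed

lemma phom_zm: assumes "phom h F" "(a,z) \<in> F" shows "(zm j a, z powi j) \<in> F"
proof (induction j rule: int_induct[where k=0])
  case base then show ?case using phom_zero[OF assms(1)] by simp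
next
  case (step1 i)
  have "z \<noteq> 0" using assms unfolding phom_def by blast
  have "(zm i a + a, z powi i * z) \<in> F" using step1 assms unfolding phom_def by blast
  then show ?case using \<open>z \<noteq> 0\<close> by (simp add: zm_succ power_int_add_1)
next
  case (step2 i)
  have "z \<noteq> 0" and inv: "(-a, inverse z) \<in> F" using assms unfolding phom_def by blast+
  have "(zm i a + - a, z powi i * inverse z) \<in> F" using step2 inv assms unfolding phom_def by blast
  moreover have "z powi (i - 1) = z powi i * inverse z" using \<open>z \<noteq> 0\<close>
    by (simp add: power_int_diff divide_inverse)
  ultimately show ?case by (simp add: zm_pred)
qed

lemma phom_fun: "phom h F \<Longrightarrow> (a,z) \<in> F \<Longrightarrow> (a,w) \<in> F \<Longrightarrow> z = w"
  unfolding phom_def by blast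

lemma phom_add: "phom h F \<Longrightarrow> (a,z) \<in> F \<Longrightarrow> (b,w) \<in> F \<Longrightarrow> (a+b, z*w) \<in> F"
  unfolding phom_def by blast

lemma phom_inv: "phom h F \<Longrightarrow> (a,z) \<in> F \<Longrightarrow> (-a, inverse z) \<in> F"
  unfolding phom_def by blast

lemma phom_nz: "phom h F \<Longrightarrow> (a,z) \<in> F \<Longrightarrow> z \<noteq> 0"
  unfolding phom_def by blast

lemma nth_root_ex: fixes c :: complex assumes "c \<noteq> 0" "n > 0" shows "\<exists>w. w ^ n = c"
proof -
  have "1 \<in> {z::complex. z ^ n = 1}" by simp
  then have "(root n (norm c) * cis (Arg c / n)) * 1 \<in> {z. z ^ n = c}"
    using bij_betw_nth_root_unity[OF assms] unfolding bij_betw_def by blast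
  then show ?thesis by blast
qed

lemma phom_extend:
  assumes M: "phom h M" and g: "g \<notin> fst ` M"
  shows "\<exists>M'. phom h M' \<and> M \<subseteq> M' \<and> M' \<noteq> M"
proof -
  have "\<exists>\<omega>. \<omega> \<noteq> 0 \<and> (\<forall>j z. (zm j g, z) \<in> M \<longrightarrow> z = \<omega> powi j)"
  proof (cases "\<exists>n::nat. n > 0 \<and> zm (int n) g \<in> fst ` M")
    case True
    define n0 where "n0 = (LEAST n::nat. n > 0 \<and> zm (int n) g \<in> fst ` M)"
    have n0: "n0 > 0 \<and> zm (int n0) g \<in> fst ` M" unfolding n0_def using True by (rule LeastI_ex)
    then obtain z0 where z0: "(zm (int n0) g, z0) \<in> M" by force
    have "z0 \<noteq> 0" using phom_nz[OF M z0] .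
    then obtain \<omega> where \<omega>: "\<omega> ^ n0 = z0" using nth_root_ex n0 by blast
    have "\<omega> \<noteq> 0" using \<omega> \<open>z0 \<noteq> 0\<close> n0 by auto
    show ?thesis
    proof (intro exI conjI allI impI)
      show "\<omega> \<noteq> 0" by fact
      fix j z assume jz: "(zm j g, z) \<in> M"
      define q where "q = j div int n0"
      define r where "r = j mod int n0"
      have jqr: "j = q * int n0 + r" unfolding q_def r_def by simp
      have r0: "0 \<le> r" "r < int n0" unfolding r_def using n0 by auto
      have A: "(zm q (zm (int n0) g), z0 powi q) \<in> M" using phom_zm[OF M z0] .
      have B: "(- zm q (zm (int n0) g), inverse (z0 powi q)) \<in> M" using phom_inv[OF M A] .
      have "zm r g = zm j g + - zm q (zm (int n0) g)"
        by (simp add: jqr zm_add zm_mult)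
      then have C: "(zm r g, z * inverse (z0 powi q)) \<in> M" using phom_add[OF M jz B] by simp
      have "r = 0"
      proof (rule ccontr)
        assume "r \<noteq> 0"
        then have "nat r > 0 \<and> zm (int (nat r)) g \<in> fst ` M" using r0 C by force
        then have "n0 \<le> nat r" unfolding n0_def by (rule Least_le)
        then show False using r0 by linarith
      qed
      then have "(zm r g, 1) \<in> M" using phom_zero[OF M] by simp
      with C have "z * inverse (z0 powi q) = 1" using phom_fun[OF M] by blast
      moreover have "z0 powi q \<noteq> 0" using \<open>z0 \<noteq> 0\<close> by simp
      ultimately have "z = z0 powi q" by (simp add: field_simps)
      also have "\<dots> = \<omega> powi (int n0 * q)" by (simp add: \<omega>[symmetric] power_int_mult)
      also have "int n0 * q = j" using jqr \<open>r = 0\<close> by simp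
      finally show "z = \<omega> powi j" .
    qed
  next
    case False
    show ?thesis
    proof (intro exI conjI allI impI)
      show "(1::complex) \<noteq> 0" by simp
      fix j z assume jz: "(zm j g, z) \<in> M"
      have "j = 0"
      proof (rule ccontr)
        assume "j \<noteq> 0"
        show False
        proof (cases "j > 0")
          case True
          then have "nat j > 0 \<and> zm (int (nat j)) g \<in> fst ` M" using jz by force
          then show False using False by blast
        next
          case F: False
          have "(- zm j g, inverse z) \<in> M" using phom_inv[OF M jz] .
          then have "(zm (int (nat (-j))) g, inverse z) \<in> M" using F \<open>j \<noteq> 0\<close> by (simp add: zm_minus[symmetric])
          moreover have "nat (-j) > 0" using F \<open>j \<noteq> 0\<close> by simp
          ultimately have "nat (-j) > 0 \<and> zm (int (nat (-j))) g \<in> fst ` M" by force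
          then show False using False by blast
        qed
      qed
      then show "z = 1 powi j" using jz phom_zero[OF M] phom_fun[OF M] by auto
    qed
  qed
  then obtain \<omega> where \<omega>0: "\<omega> \<noteq> 0" and \<omega>: "\<And>j z. (zm j g, z) \<in> M \<Longrightarrow> z = \<omega> powi j" by blast
  define M' where "M' = {(k + zm j g, z * \<omega> powi j) | k z j. (k,z) \<in> M}"
  have "phom h M'"
    unfolding phom_def
  proof (intro conjI allI impI)
    fix a z b w assume "(a,z) \<in> M'" "(b,w) \<in> M'"
    then obtain k1 z1 j1 k2 z2 j2 where 1: "(k1,z1) \<in> M" "a = k1 + zm j1 g" "z = z1 * \<omega> powi j1"
      and 2: "(k2,z2) \<in> M" "b = k2 + zm j2 g" "w = z2 * \<omega> powi j2" unfolding M'_def by blast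
    have "(k1 + k2, z1 * z2) \<in> M" using phom_add[OF M 1(1) 2(1)] .
    moreover have "a + b = (k1 + k2) + zm (j1 + j2) g" using 1 2 by (simp add: zm_add algebra_simps)
    moreover have "z * w = (z1 * z2) * \<omega> powi (j1 + j2)" using 1 2 \<omega>0 by (simp add: power_int_add)
    ultimately show "(a + b, z * w) \<in> M'" unfolding M'_def by blast
  next
    fix a z w assume "(a,z) \<in> M'" "(a,w) \<in> M'"
    then obtain k1 z1 j1 k2 z2 j2 where 1: "(k1,z1) \<in> M" "a = k1 + zm j1 g" "z = z1 * \<omega> powi j1"
      and 2: "(k2,z2) \<in> M" "a = k2 + zm j2 g" "w = z2 * \<omega> powi j2" unfolding M'_def by blast
    have "(k2 + - k1, z2 * inverse z1) \<in> M" using phom_add[OF M 2(1) phom_inv[OF M 1(1)]] .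
    moreover have "k2 + - k1 = zm (j1 - j2) g"
    proof -
      have e: "k1 + zm j1 g = k2 + zm j2 g" using 1 2 by simp
      have "zm (j1 - j2) g = zm j1 g - zm j2 g" using zm_add[of j1 "-j2" g] zm_minus[of j2 g] by simp
      also have "\<dots> = (k1 + zm j1 g) - k1 - zm j2 g" by simp
      also have "\<dots> = (k2 + zm j2 g) - k1 - zm j2 g" by (simp only: e)
      also have "\<dots> = k2 + - k1" by simp
      finally show ?thesis by simp
    qed
    ultimately have "z2 * inverse z1 = \<omega> powi (j1 - j2)" using \<omega> by auto
    moreover have "z1 \<noteq> 0" using phom_nz[OF M 1(1)] .
    ultimately have "z2 = z1 * \<omega> powi (j1 - j2)" by (simp add: field_simps)
    then have "w = z1 * (\<omega> powi (j1 - j2) * \<omega> powi j2)" using 2 by (simp add: mult.assoc)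
    also have "\<omega> powi (j1 - j2) * \<omega> powi j2 = \<omega> powi j1"
      using power_int_add[of \<omega> "j1 - j2" j2] \<omega>0 by simp
    finally show "z = w" using 1 by simp
  next
    have "(h,-1) \<in> M" using M by (simp add: phom_def)
    moreover have "(h, -1) = (h + zm 0 g, (-1) * \<omega> powi 0)" by simp
    ultimately show "(h, -1) \<in> M'" unfolding M'_def by blast
  next
    fix a z assume "(a,z) \<in> M'"
    then obtain k1 z1 j1 where 1: "(k1,z1) \<in> M" "a = k1 + zm j1 g" "z = z1 * \<omega> powi j1"
      unfolding M'_def by blast
    show "z \<noteq> 0" using 1 \<omega>0 phom_nz[OF M 1(1)] by simp
    have "(-k1, inverse z1) \<in> M" using phom_inv[OF M 1(1)] .
    moreover have "-a = -k1 + zm (-j1) g" using 1 by (simp add: zm_minus)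
    moreover have "inverse z = inverse z1 * \<omega> powi (-j1)" using 1 by (simp add: power_int_minus)
    ultimately show "(-a, inverse z) \<in> M'" unfolding M'_def by blast
  qed
  moreover have "M \<subseteq> M'"
  proof
    fix p assume "p \<in> M"
    then obtain k z where "p = (k,z)" "(k,z) \<in> M" by (cases p) auto
    moreover have "p = (k + zm 0 g, z * \<omega> powi 0)" using \<open>p = (k,z)\<close> by simp
    ultimately show "p \<in> M'" unfolding M'_def by blast
  qed
  moreover have "(g, \<omega>) \<in> M'"
  proof -
    have "(0 + zm 1 g, 1 * \<omega> powi 1) \<in> M'" unfolding M'_def using phom_zero[OF M] by blast
    then show ?thesis by simp
  qed
  then have "M' \<noteq> M" using g by (metis fst_conv image_eqI)
  ultimately show ?thesis by blast
qed

lemma char_exists: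
  fixes h :: "'g::ab_group_add"
  assumes "h \<noteq> 0" "h + h = 0"
  shows "\<exists>\<chi>::'g \<Rightarrow> complex. (\<forall>a b. \<chi> (a+b) = \<chi> a * \<chi> b) \<and> (\<forall>a. \<chi> a \<noteq> 0) \<and> \<chi> h = -1"
proof -
  define F0 :: "('g \<times> complex) set" where "F0 = {(0,1),(h,-1)}"
  have hh: "-h = h" using assms(2) by (rule minus_unique)
  have F0: "phom h F0" unfolding phom_def F0_def using assms hh by auto
  have "\<exists>M\<in>{F. phom h F}. \<forall>X\<in>{F. phom h F}. M \<subseteq> X \<longrightarrow> X = M"
  proof (rule Zorn_Lemma2, intro ballI)
    fix C assume C: "C \<in> chains {F. phom h F}"
    show "\<exists>U\<in>{F. phom h F}. \<forall>X\<in>C. X \<subseteq> U"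
    proof (cases "C = {}")
      case True then show ?thesis using F0 by blast
    next
      case False
      have CA: "\<And>X. X \<in> C \<Longrightarrow> phom h X" using C unfolding chains_def by blast
      have ch: "\<And>X Y. X \<in> C \<Longrightarrow> Y \<in> C \<Longrightarrow> X \<subseteq> Y \<or> Y \<subseteq> X"
        using C unfolding chains_def chain_subset_def by blast
      have two: "\<And>p q. p \<in> \<Union>C \<Longrightarrow> q \<in> \<Union>C \<Longrightarrow> \<exists>X\<in>C. p \<in> X \<and> q \<in> X"
        using ch by blast
      have "phom h (\<Union>C)"
        unfolding phom_def
      proof (intro conjI allI impI)
        fix a z b w assume "(a,z) \<in> \<Union>C" "(b,w) \<in> \<Union>C"
        then obtain X where "X \<in> C" "(a,z) \<in> X" "(b,w) \<in> X" using two by blast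
        then show "(a+b, z*w) \<in> \<Union>C" using phom_add[OF CA] by blast
      next
        fix a z w assume "(a,z) \<in> \<Union>C" "(a,w) \<in> \<Union>C"
        then obtain X where "X \<in> C" "(a,z) \<in> X" "(a,w) \<in> X" using two by blast
        then show "z = w" using phom_fun[OF CA] by blast
      next
        obtain X where "X \<in> C" using False by blast
        then show "(h,-1) \<in> \<Union>C" using CA unfolding phom_def by blast
      next
        fix a z assume "(a,z) \<in> \<Union>C"
        then obtain X where "X \<in> C" "(a,z) \<in> X" by blast
        then show "z \<noteq> 0" "(-a, inverse z) \<in> \<Union>C" using phom_nz[OF CA] phom_inv[OF CA] by blast+
      qed
      then show ?thesis by blast
    qed
  qed
  then obtain M where M: "phom h M" and max: "\<And>X. phom h X \<Longrightarrow> M \<subseteq> X \<Longrightarrow> X = M" by blast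
  have tot: "\<And>g. g \<in> fst ` M"
  proof (rule ccontr)
    fix g assume "g \<notin> fst ` M"
    then show False using phom_extend[OF M] max by blast
  qed
  define \<chi> where "\<chi> g = (THE z. (g,z) \<in> M)" for g
  have ch: "(g, \<chi> g) \<in> M" for g
  proof -
    obtain z where "(g,z) \<in> M" using tot[of g] by force
    then show ?thesis unfolding \<chi>_def by (rule theI) (use phom_fun[OF M] \<open>(g,z) \<in> M\<close> in blast)
  qed
  have val: "\<And>g z. (g,z) \<in> M \<Longrightarrow> \<chi> g = z" using ch phom_fun[OF M] by blast
  show ?thesis
  proof (intro exI conjI allI)
    fix a b show "\<chi> (a+b) = \<chi> a * \<chi> b" using val phom_add[OF M ch ch] by blast
  next
    fix a show "\<chi> a \<noteq> 0" using phom_nz[OF M ch] .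
  next
    show "\<chi> h = -1" using val M by (simp add: phom_def)
  qed
qed


locale gr =
  fixes J :: "'b::real_vector \<Rightarrow> 'b" and m :: "'b \<Rightarrow> 'b \<Rightarrow> 'b"
    and V :: "'g::ab_group_add \<Rightarrow> 'b set"
  assumes B: "ccentral_simple J m"
    and Gamma: "grading UNIV m UNIV (+) V"
begin

lemma linJ: "linear J" using B by (simp add: ccentral_simple_def calg_def)
lemma JJ[simp]: "J (J x) = - x" using B by (simp add: ccentral_simple_def calg_def)
lemma mJl: "m (J x) y = J (m x y)" using B by (simp add: ccentral_simple_def calg_def)
lemma mJr: "m x (J y) = J (m x y)" using B by (simp add: ccentral_simple_def calg_def)
lemma ralgm: "ralg UNIV m" using B by (simp add: ccentral_simple_def calg_def)
lemma linml: "linear (\<lambda>x. m x y)"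
  using ralgm by (intro linearI) (auto simp: ralg_def)
lemma linmr: "linear (m x)"
  using ralgm by (intro linearI) (auto simp: ralg_def)

lemma m0l[simp]: "m 0 y = 0" using linear_0[OF linml] by simp
lemma m0r[simp]: "m x 0 = 0" using linear_0[OF linmr] by simp
lemma J0[simp]: "J 0 = 0" using linear_0[OF linJ] .
lemma Jadd: "J (x + y) = J x + J y" using linear_add[OF linJ] .
lemma Jscale: "J (r *\<^sub>R x) = r *\<^sub>R J x" using linear_scale[OF linJ] .
lemma Jneg: "J (- x) = - J x" using linear_neg[OF linJ] .
lemma Jdiff: "J (x - y) = J x - J y" using linear_diff[OF linJ] .
lemma Jinj: "J x = 0 \<Longrightarrow> x = 0" using JJ[of x] by simp
lemma Jeq: "J x = J y \<longleftrightarrow> x = y" using JJ by (metis neg_equal_iff_equal)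
lemma maddl: "m (x + y) z = m x z + m y z" using linear_add[OF linml] .
lemma maddr: "m z (x + y) = m z x + m z y" using linear_add[OF linmr] .
lemma mscl: "m (r *\<^sub>R x) y = r *\<^sub>R m x y" using linear_scale[OF linml] .
lemma mscr: "m x (r *\<^sub>R y) = r *\<^sub>R m x y" using linear_scale[OF linmr] .
lemma mnegl: "m (- x) y = - m x y" using linear_neg[OF linml] .
lemma mnegr: "m x (- y) = - m x y" using linear_neg[OF linmr] .
lemma mdiffl: "m (x - y) z = m x z - m y z" using linear_diff[OF linml] .
lemma mdiffr: "m z (x - y) = m z x - m z y" using linear_diff[OF linmr] .
lemma msuml: "m (sum f A) y = (\<Sum>a\<in>A. m (f a) y)" using linear_sum[OF linml] .
lemma msumr: "m x (sum f A) = (\<Sum>a\<in>A. m x (f a))" using linear_sum[OF linmr] .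

lemma nontriv: "\<exists>x y. m x y \<noteq> 0" using B by (simp add: ccentral_simple_def csimple_def)
lemma csimp: "cideal J m I \<Longrightarrow> I = {0} \<or> I = UNIV"
  using B by (simp add: ccentral_simple_def csimple_def)
lemma ccent: "c \<in> ccentroid J m \<Longrightarrow> \<exists>a b. c = (\<lambda>x. a *\<^sub>R x + b *\<^sub>R J x)"
  using B by (simp add: ccentral_simple_def)

lemma lin_preimage: "linear f \<Longrightarrow> subspace S \<Longrightarrow> subspace {x. f x \<in> S}"
  by (auto simp: subspace_def linear_add linear_scale linear_0)

lemma J_span_closed:
  assumes "x \<in> span G" and "\<And>x. x \<in> G \<Longrightarrow> J x \<in> span G" shows "J x \<in> span G"
  using assms(1)
proof (induction rule: span_induct)
  case base
  show ?case using lin_preimage[OF linJ subspace_span] by simp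
next
  case (step x) then show ?case using assms(2) by blast
qed

lemma rideal_triv:
  assumes I: "rideal UNIV m I" shows "I = {0} \<or> I = UNIV"
proof -
  have sI: "subspace I" and idl: "\<And>x y. y \<in> I \<Longrightarrow> m x y \<in> I \<and> m y x \<in> I"
    using I by (auto simp: rideal_def)
  define G where "G = {m b i | b i. i \<in> I} \<union> {m i b | b i. i \<in> I}"
  define K where "K = span G"
  have GI: "G \<subseteq> I" using idl unfolding G_def by blast
  have KI: "K \<subseteq> I" unfolding K_def using span_minimal[OF GI sI] .
  have Kid: "m x y \<in> K \<and> m y x \<in> K" if "y \<in> K" for x y
  proof -
    have "y \<in> span G" using that K_def by simp
    then show ?thesis
    proof (induction rule: span_induct)
      case base
      have "subspace {y. m x y \<in> K}" unfolding K_def by (rule lin_preimage[OF linmr subspace_span])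
      moreover have "subspace {y. m y x \<in> K}" unfolding K_def by (rule lin_preimage[OF linml subspace_span])
      ultimately show ?case using subspace_inter by (simp add: Collect_conj_eq)
    next
      case (step y)
      then obtain b i where "i \<in> I" and y: "y = m b i \<or> y = m i b" unfolding G_def by blast
      have "m b i \<in> I" "m i b \<in> I" using idl \<open>i \<in> I\<close> by auto
      then have "m x y \<in> G" "m y x \<in> G" using y unfolding G_def by blast+
      then show ?case unfolding K_def by (simp add: span_base)
    qed
  qed
  have KJ: "J x \<in> K" if "x \<in> K" for x
    using that unfolding K_def
  proof (rule J_span_closed)
    fix x assume "x \<in> G"
    then obtain b i where iI: "i \<in> I" and y: "x = m b i \<or> x = m i b" unfolding G_def by blast
    from y have "J x \<in> G"
    proof
      assume "x = m b i" then have "J x = m (J b) i" by (simp add: mJl)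
      then show ?thesis unfolding G_def using \<open>i \<in> I\<close> by blast
    next
      assume "x = m i b" then have "J x = m i (J b)" by (simp add: mJr)
      then show ?thesis unfolding G_def using \<open>i \<in> I\<close> by blast
    qed
    then show "J x \<in> span G" by (simp add: span_base)
  qed
  have "cideal J m K" unfolding cideal_def rideal_def
  proof (intro conjI ballI subsetI)
    show "subspace K" unfolding K_def by simp
  qed (use Kid KJ in auto)
  then have "K = {0} \<or> K = UNIV" by (rule csimp)
  then show ?thesis
  proof
    assume "K = UNIV" then show ?thesis using KI by blast
  next
    assume K0: "K = {0}"
    define Ann where "Ann = {x. \<forall>b. m b x = 0 \<and> m x b = 0}"
    have sA: "subspace Ann" unfolding Ann_def
      by (rule subspaceI) (simp_all add: maddl maddr mscl mscr)
    have "cideal J m Ann" unfolding cideal_def rideal_def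
    proof (intro conjI ballI subsetI)
      fix x assume "x \<in> J ` Ann" then show "x \<in> Ann" unfolding Ann_def by (auto simp: mJl mJr)
    qed (use sA in \<open>auto simp: Ann_def\<close>)
    then have "Ann = {0} \<or> Ann = UNIV" by (rule csimp)
    moreover have "Ann \<noteq> UNIV" using nontriv unfolding Ann_def by auto
    moreover have "I \<subseteq> Ann"
    proof
      fix i assume "i \<in> I"
      then have "m b i \<in> G" "m i b \<in> G" for b unfolding G_def by blast+
      then show "i \<in> Ann" using K0 unfolding K_def Ann_def using span_base by blast
    qed
    ultimately show ?thesis using subspace_0[OF sI] by blast
  qed
qed

lemma span_prod: "span {m x y | x y. True} = UNIV"
proof -
  define L where "L = span {m x y | x y. True}"
  have "J x \<in> L" if "x \<in> L" for x
    using that unfolding L_def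
  proof (rule J_span_closed)
    fix x assume "x \<in> {m x y | x y. True}"
    then obtain a b where "x = m a b" by blast
    then have "J x = m (J a) b" by (simp add: mJl)
    then show "J x \<in> span {m x y | x y. True}" by (intro span_base) blast
  qed
  moreover have "m x y \<in> L" for x y unfolding L_def by (rule span_base) blast
  ultimately have "cideal J m L" unfolding cideal_def rideal_def by (auto simp: L_def)
  then have "L = {0} \<or> L = UNIV" by (rule csimp)
  moreover have "L \<noteq> {0}" using nontriv \<open>\<And>x y. m x y \<in> L\<close> by blast
  ultimately show ?thesis unfolding L_def by blast
qed

lemma lin_on_linear: "lin_on UNIV c \<Longrightarrow> linear c"
  by (intro linearI) (auto simp: lin_on_def)

lemma rcent_J: assumes c: "c \<in> rcentroid UNIV m" shows "c (J x) = J (c x)"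
proof -
  have lc: "linear c" using c by (simp add: rcentroid_def lin_on_linear)
  have cm: "c (m a b) = m (c a) b" "c (m a b) = m a (c b)" for a b using c unfolding rcentroid_def by blast+
  have "x \<in> span {m x y | x y. True}" using span_prod by simp
  then show ?thesis
  proof (induction rule: span_induct)
    case base
    have "linear (\<lambda>x. c (J x) - J (c x))"
      using lc linJ by (intro linearI) (auto simp: linear_add linear_scale algebra_simps)
    from lin_preimage[OF this subspace_single_0] show ?case by simp
  next
    case (step x)
    then obtain a b where x: "x = m a b" by blast
    have "c (J (m a b)) = c (m (J a) b)" by (simp add: mJl)
    also have "\<dots> = m (J a) (c b)" by (rule cm(2))
    also have "\<dots> = J (m a (c b))" by (rule mJl)
    also have "m a (c b) = c (m a b)" by (rule cm(2)[symmetric])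
    finally show ?case using x by simp
  qed
qed

lemma rcent_form: assumes c: "c \<in> rcentroid UNIV m" shows "\<exists>a b. c = (\<lambda>x. a *\<^sub>R x + b *\<^sub>R J x)"
proof -
  have "c \<in> ccentroid J m" using c rcent_J[OF c] unfolding ccentroid_def rcentroid_def
    using lin_on_linear by blast
  then show ?thesis by (rule ccent)
qed

lemma scal_rcent: "(\<lambda>x. a *\<^sub>R x + b *\<^sub>R J x) \<in> rcentroid UNIV m"
  unfolding rcentroid_def lin_on_def
  by (simp add: Jadd Jscale maddl maddr mscl mscr mJl mJr scaleR_add_right mult.commute)


lemma Vsub: "subspace (V g)" using Gamma by (simp add: grading_def)
lemma mV: "x \<in> V a \<Longrightarrow> y \<in> V b \<Longrightarrow> m x y \<in> V (a + b)" using Gamma by (simp add: grading_def)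
lemma V0: "0 \<in> V g" using subspace_0[OF Vsub] .
lemma Vadd: "x \<in> V g \<Longrightarrow> y \<in> V g \<Longrightarrow> x + y \<in> V g" using subspace_add[OF Vsub] .
lemma Vscale: "x \<in> V g \<Longrightarrow> r *\<^sub>R x \<in> V g" using subspace_scale[OF Vsub] .
lemma Vneg: "x \<in> V g \<Longrightarrow> - x \<in> V g" using subspace_neg[OF Vsub] .
lemma Vdiff: "x \<in> V g \<Longrightarrow> y \<in> V g \<Longrightarrow> x - y \<in> V g" using subspace_diff[OF Vsub] .
lemma Vsum: "(\<And>i. i \<in> A \<Longrightarrow> f i \<in> V g) \<Longrightarrow> sum f A \<in> V g" using subspace_sum[OF Vsub] .

definition decp :: "'b \<Rightarrow> ('g \<Rightarrow> 'b) \<Rightarrow> bool" where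
  "decp x f \<longleftrightarrow> (\<forall>i. f i \<in> V i) \<and> finite {i. f i \<noteq> 0} \<and> x = (\<Sum>i\<in>{i. f i \<noteq> 0}. f i)"

lemma dec_ex1: "\<exists>!f. decp x f"
  using Gamma unfolding grading_def decp_def by simp

definition P :: "'b \<Rightarrow> 'g \<Rightarrow> 'b" where "P x = (THE f. decp x f)"

lemma P_decp: "decp x (P x)" unfolding P_def using dec_ex1 by (rule theI')
lemma P_V[simp]: "P x g \<in> V g" using P_decp by (simp add: decp_def)
lemma P_fin[simp]: "finite {g. P x g \<noteq> 0}" using P_decp by (simp add: decp_def)
lemma P_sum: "x = (\<Sum>g\<in>{g. P x g \<noteq> 0}. P x g)" using P_decp by (simp add: decp_def)

lemma sum_supp:
  fixes f :: "'g \<Rightarrow> 'b"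
  assumes "finite F" "{i. f i \<noteq> 0} \<subseteq> F" shows "sum f F = (\<Sum>i\<in>{i. f i \<noteq> 0}. f i)"
  by (rule sum.mono_neutral_right) (use assms in auto)

lemma P_unique:
  assumes "\<And>i. f i \<in> V i" "finite F" "{i. f i \<noteq> 0} \<subseteq> F" "x = sum f F"
  shows "P x = f"
proof -
  have fin: "finite {i. f i \<noteq> 0}" using assms(2,3) finite_subset by blast
  have "decp x f" unfolding decp_def using assms fin sum_supp[OF assms(2,3)] by simp
  then show ?thesis using P_decp dec_ex1 by blast
qed

lemma P_sumF: "finite F \<Longrightarrow> {g. P x g \<noteq> 0} \<subseteq> F \<Longrightarrow> x = sum (P x) F"
  using sum_supp[of F "P x"] P_sum[of x] by simp

lemma P_add: "P (x + y) = (\<lambda>g. P x g + P y g)"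
proof (rule P_unique)
  let ?F = "{g. P x g \<noteq> 0} \<union> {g. P y g \<noteq> 0}"
  show "finite ?F" by simp
  show "{i. P x i + P y i \<noteq> 0} \<subseteq> ?F" by auto
  show "x + y = (\<Sum>i\<in>?F. P x i + P y i)"
    by (simp add: sum.distrib P_sumF[symmetric])
qed (simp add: Vadd)

lemma P_scale: "P (r *\<^sub>R x) = (\<lambda>g. r *\<^sub>R P x g)"
proof (rule P_unique)
  let ?F = "{g. P x g \<noteq> 0}"
  show "finite ?F" by simp
  show "{i. r *\<^sub>R P x i \<noteq> 0} \<subseteq> ?F" by auto
  show "r *\<^sub>R x = (\<Sum>i\<in>?F. r *\<^sub>R P x i)"
    by (simp add: scaleR_sum_right[symmetric] P_sum[symmetric])
qed (simp add: Vscale)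

lemma linP: "linear (\<lambda>x. P x g)"
  by (intro linearI) (simp_all add: P_add P_scale)

lemma P0[simp]: "P 0 g = 0" using linear_0[OF linP] .
lemma P_neg: "P (- x) g = - P x g" using linear_neg[OF linP] .
lemma P_diff: "P (x - y) g = P x g - P y g" using linear_diff[OF linP] .
lemma P_sumf: "P (sum f A) g = (\<Sum>a\<in>A. P (f a) g)" using linear_sum[OF linP] .

lemma P_hom: assumes "x \<in> V a" shows "P x = (\<lambda>g. if g = a then x else 0)"
  by (rule P_unique[where F="{a}"]) (use assms V0 in auto)

lemma P_hom_same: "x \<in> V a \<Longrightarrow> P x a = x" using P_hom by simp
lemma P_hom_other: "x \<in> V a \<Longrightarrow> g \<noteq> a \<Longrightarrow> P x g = 0" using P_hom by simp

lemma V_inter: "a \<noteq> b \<Longrightarrow> x \<in> V a \<Longrightarrow> x \<in> V b \<Longrightarrow> x = 0"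
  using P_hom_same[of x a] P_hom_other[of x b a] by simp

lemma eq_by_P: assumes "\<And>g. P x g = P y g" shows "x = y"
proof -
  have "P x = P y" using assms by auto
  then show ?thesis using P_sum[of x] P_sum[of y] by simp
qed

lemma P_mul_left: assumes y: "y \<in> V a" shows "P (m y w) c = m y (P w (c - a))"
proof -
  let ?F = "{b. P w b \<noteq> 0}"
  have "m y w = (\<Sum>b\<in>?F. m y (P w b))" using msumr[of y "P w" ?F] P_sum[of w] by simp
  then have "P (m y w) c = (\<Sum>b\<in>?F. P (m y (P w b)) c)" by (simp add: P_sumf)
  also have "\<dots> = (\<Sum>b\<in>?F. if b = c - a then m y (P w b) else 0)"
  proof (rule sum.cong)
    fix b assume "b \<in> ?F"
    have "m y (P w b) \<in> V (a + b)" using mV[OF y P_V] .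
    then show "P (m y (P w b)) c = (if b = c - a then m y (P w b) else 0)"
      using P_hom[of "m y (P w b)" "a + b"] by (auto simp: algebra_simps)
  qed simp
  also have "\<dots> = m y (P w (c - a))" by (simp add: sum.delta')
  finally show ?thesis .
qed

lemma P_mul_right: assumes z: "z \<in> V b" shows "P (m w z) c = m (P w (c - b)) z"
proof -
  let ?F = "{a. P w a \<noteq> 0}"
  have "m w z = (\<Sum>a\<in>?F. m (P w a) z)" using msuml[of "P w" ?F z] P_sum[of w] by simp
  then have "P (m w z) c = (\<Sum>a\<in>?F. P (m (P w a) z) c)" by (simp add: P_sumf)
  also have "\<dots> = (\<Sum>a\<in>?F. if a = c - b then m (P w a) z else 0)"
  proof (rule sum.cong)
    fix a assume "a \<in> ?F"
    have "m (P w a) z \<in> V (a + b)" using mV[OF P_V z] .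
    then show "P (m (P w a) z) c = (if a = c - b then m (P w a) z else 0)"
      using P_hom[of "m (P w a) z" "a + b"] by (auto simp: algebra_simps)
  qed simp
  also have "\<dots> = m (P w (c - b)) z" by (simp add: sum.delta')
  finally show ?thesis .
qed

lemma P_mul: "P (m x y) k = (\<Sum>a\<in>{a. P x a \<noteq> 0}. m (P x a) (P y (k - a)))"
proof -
  let ?F = "{a. P x a \<noteq> 0}"
  have "m x y = (\<Sum>a\<in>?F. m (P x a) y)" using msuml[of "P x" ?F y] P_sum[of x] by simp
  then have "P (m x y) k = (\<Sum>a\<in>?F. P (m (P x a) y) k)" by (simp add: P_sumf)
  also have "\<dots> = (\<Sum>a\<in>?F. m (P x a) (P y (k - a)))" by (rule sum.cong[OF refl], rule P_mul_left, rule P_V)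
  finally show ?thesis .
qed

lemma hom_nonzero: "\<exists>g x. x \<in> V g \<and> x \<noteq> 0"
proof -
  obtain a b where "m a b \<noteq> 0" using nontriv by blast
  then have "a \<noteq> 0" by auto
  then obtain g where "P a g \<noteq> 0" using P_sum[of a] by force
  then show ?thesis using P_V by blast
qed


subsection \<open>Dichotomy\<close>

lemma bilin_ext:
  fixes F G :: "'b \<Rightarrow> 'b \<Rightarrow> 'b"
  assumes F1: "\<And>x. linear (F x)" and F2: "\<And>y. linear (\<lambda>x. F x y)"
    and G1: "\<And>x. linear (G x)" and G2: "\<And>y. linear (\<lambda>x. G x y)"
    and hom: "\<And>a b x y. x \<in> V a \<Longrightarrow> y \<in> V b \<Longrightarrow> F x y = G x y"
  shows "F x y = G x y"
proof -
  let ?A = "{a. P x a \<noteq> 0}" and ?B = "{b. P y b \<noteq> 0}"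
  have ex: "H x y = (\<Sum>a\<in>?A. \<Sum>b\<in>?B. H (P x a) (P y b))"
    if H1: "\<And>x. linear (H x)" and H2: "\<And>y. linear (\<lambda>x. H x y)" for H :: "'b \<Rightarrow> 'b \<Rightarrow> 'b"
  proof -
    have "H x y = H (\<Sum>a\<in>?A. P x a) y" using P_sum[of x] by simp
    also have "\<dots> = (\<Sum>a\<in>?A. H (P x a) y)" using linear_sum[OF H2] by simp
    also have "\<dots> = (\<Sum>a\<in>?A. H (P x a) (\<Sum>b\<in>?B. P y b))" using P_sum[of y] by simp
    also have "\<dots> = (\<Sum>a\<in>?A. \<Sum>b\<in>?B. H (P x a) (P y b))" by (rule sum.cong[OF refl], rule linear_sum[OF H1])
    finally show ?thesis .
  qed
  show ?thesis using ex[of F, OF F1 F2] ex[of G, OF G1 G2] hom[OF P_V P_V] by simp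
qed

definition Jk :: "'g \<Rightarrow> 'b \<Rightarrow> 'b" where
  "Jk k y = (\<Sum>g\<in>{g. P y g \<noteq> 0}. P (J (P y g)) (g + k))"

lemma Jk_F: assumes "finite F" "{g. P y g \<noteq> 0} \<subseteq> F"
  shows "Jk k y = (\<Sum>g\<in>F. P (J (P y g)) (g + k))"
  unfolding Jk_def by (rule sum.mono_neutral_left) (use assms in auto)

lemma Jk_hom: assumes "y \<in> V a" shows "Jk k y = P (J y) (a + k)"
proof -
  have "Jk k y = (\<Sum>g\<in>{a}. P (J (P y g)) (g + k))"
    by (rule Jk_F) (use P_hom[OF assms] in auto)
  then show ?thesis using P_hom_same[OF assms] by simp
qed

lemma Jk_V: "y \<in> V a \<Longrightarrow> Jk k y \<in> V (a + k)" using Jk_hom by simp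

lemma linJk: "linear (Jk k)"
proof (rule linearI)
  fix x y
  let ?F = "{g. P x g \<noteq> 0} \<union> {g. P y g \<noteq> 0}"
  have f: "finite ?F" by simp
  have "Jk k (x + y) = (\<Sum>g\<in>?F. P (J (P (x+y) g)) (g + k))"
    by (rule Jk_F[OF f]) (auto simp: P_add)
  also have "\<dots> = (\<Sum>g\<in>?F. P (J (P x g)) (g + k)) + (\<Sum>g\<in>?F. P (J (P y g)) (g + k))"
    by (simp add: P_add Jadd sum.distrib)
  also have "\<dots> = Jk k x + Jk k y" using Jk_F[OF f, of x k] Jk_F[OF f, of y k] by auto
  finally show "Jk k (x + y) = Jk k x + Jk k y" .
next
  fix r x
  show "Jk k (r *\<^sub>R x) = r *\<^sub>R Jk k x"
  proof -
    let ?F = "{g. P x g \<noteq> 0}"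
    have "Jk k (r *\<^sub>R x) = (\<Sum>g\<in>?F. P (J (P (r *\<^sub>R x) g)) (g + k))"
      by (rule Jk_F) (auto simp: P_scale)
    also have "\<dots> = r *\<^sub>R Jk k x" by (simp add: P_scale Jscale scaleR_sum_right Jk_def)
    finally show ?thesis .
  qed
qed

lemma Jk_cent: "Jk k \<in> rcentroid UNIV m"
proof -
  have l: "linear (Jk k)" by (rule linJk)
  have lo: "lin_on UNIV (Jk k)" unfolding lin_on_def using linear_add[OF l] linear_scale[OF l] by simp
  have 1: "Jk k (m x y) = m (Jk k x) y" for x y
  proof (rule bilin_ext[where F="\<lambda>x y. Jk k (m x y)" and G="\<lambda>x y. m (Jk k x) y"])
    fix a b x y assume x: "x \<in> V a" and y: "y \<in> V b"
    have "Jk k (m x y) = P (J (m x y)) (a + b + k)" using Jk_hom[OF mV[OF x y]] .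
    also have "\<dots> = P (m (J x) y) (a + b + k)" by (simp add: mJl)
    also have "\<dots> = m (P (J x) (a + b + k - b)) y" by (rule P_mul_right[OF y])
    also have "a + b + k - b = a + k" by (simp add: algebra_simps)
    finally show "Jk k (m x y) = m (Jk k x) y" using Jk_hom[OF x] by simp
  qed (use linear_compose[OF linmr l] linear_compose[OF linml l] linml linmr l in
       \<open>auto simp: o_def intro: linear_compose[OF l linml, unfolded o_def] linear_compose[OF l linmr, unfolded o_def]\<close>)
  have 2: "Jk k (m x y) = m x (Jk k y)" for x y
  proof (rule bilin_ext[where F="\<lambda>x y. Jk k (m x y)" and G="\<lambda>x y. m x (Jk k y)"])
    fix a b x y assume x: "x \<in> V a" and y: "y \<in> V b"
    have "Jk k (m x y) = P (J (m x y)) (a + b + k)" using Jk_hom[OF mV[OF x y]] .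
    also have "\<dots> = P (m x (J y)) (a + b + k)" by (simp add: mJr)
    also have "\<dots> = m x (P (J y) (a + b + k - a))" by (rule P_mul_left[OF x])
    also have "a + b + k - a = b + k" by (simp add: algebra_simps)
    finally show "Jk k (m x y) = m x (Jk k y)" using Jk_hom[OF y] by simp
  qed (use linear_compose[OF linmr l] linear_compose[OF linml l] linml linmr l in
       \<open>auto simp: o_def intro: linear_compose[OF l linml, unfolded o_def] linear_compose[OF l linmr, unfolded o_def]\<close>)
  show ?thesis unfolding rcentroid_def using lo 1 2 by simp
qed


lemma dich:
  assumes nc: "\<not> (\<forall>g. J ` V g \<subseteq> V g)"
  shows "\<exists>h. h \<noteq> 0 \<and> h + h = 0 \<and> (\<forall>g y. y \<in> V g \<longrightarrow> J y \<in> V (g + h))"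
proof -
  obtain a x where x: "x \<in> V a" and Jx: "J x \<notin> V a" using nc by blast
  have x0: "x \<noteq> 0" using Jx V0 by auto
  obtain k where k0: "k \<noteq> 0" and Pk: "P (J x) (a + k) \<noteq> 0"
  proof -
    have "\<exists>k. k \<noteq> 0 \<and> P (J x) (a + k) \<noteq> 0"
    proof (rule ccontr)
      assume "\<not> ?thesis"
      then have z: "P (J x) g = 0" if "g \<noteq> a" for g using that[of] by (metis add.right_neutral add_diff_cancel_left' diff_add_cancel)
      have "J x = P (J x) a"
        by (rule eq_by_P) (auto simp: P_hom[OF P_V] z)
      then show False using Jx P_V by metis
    qed
    then show ?thesis using that by blast
  qed
  obtain \<alpha> \<beta> where c: "Jk k = (\<lambda>y. \<alpha> *\<^sub>R y + \<beta> *\<^sub>R J y)" using rcent_form[OF Jk_cent] by blast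
  have cV: "\<alpha> *\<^sub>R y + \<beta> *\<^sub>R J y \<in> V (b + k)" if "y \<in> V b" for y b
    using Jk_V[OF that, of k] c by simp
  have cx: "\<alpha> *\<^sub>R x + \<beta> *\<^sub>R J x \<noteq> 0" using Jk_hom[OF x, of k] Pk c by simp
  have "\<beta> \<noteq> 0"
  proof
    assume "\<beta> = 0"
    then have "\<alpha> *\<^sub>R x \<in> V (a + k)" using cV[OF x] by simp
    moreover have "\<alpha> *\<^sub>R x \<in> V a" using Vscale[OF x] .
    moreover have "a + k \<noteq> a" using k0 by simp
    ultimately have "\<alpha> *\<^sub>R x = 0" using V_inter by blast
    then show False using cx \<open>\<beta> = 0\<close> by simp
  qed
  define \<gamma> where "\<gamma> = - \<alpha> / \<beta>"
  have step: "J y - \<gamma> *\<^sub>R y \<in> V (b + k)" if "y \<in> V b" for y b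
  proof -
    have "(1/\<beta>) *\<^sub>R (\<alpha> *\<^sub>R y + \<beta> *\<^sub>R J y) \<in> V (b + k)" using Vscale[OF cV[OF that]] .
    moreover have "(1/\<beta>) *\<^sub>R (\<alpha> *\<^sub>R y + \<beta> *\<^sub>R J y) = J y - \<gamma> *\<^sub>R y"
      using \<open>\<beta> \<noteq> 0\<close> by (simp add: \<gamma>_def scaleR_add_right algebra_simps)
    ultimately show ?thesis by simp
  qed
  define w where "w = J x - \<gamma> *\<^sub>R x"
  have w: "w \<in> V (a + k)" unfolding w_def using step[OF x] .
  define w' where "w' = J w - \<gamma> *\<^sub>R w"
  have w': "w' \<in> V (a + k + k)" unfolding w'_def using step[OF w] .
  have w'eq: "w' = - ((1 + \<gamma>^2) *\<^sub>R x) - (2 * \<gamma>) *\<^sub>R w"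
  proof -
    have e1: "(\<gamma> * (\<gamma> * 2)) *\<^sub>R x = (\<gamma> * \<gamma>) *\<^sub>R x + (\<gamma> * \<gamma>) *\<^sub>R x" by (simp add: scaleR_add_left[symmetric])
    have e2: "(\<gamma> * 2) *\<^sub>R J x = \<gamma> *\<^sub>R J x + \<gamma> *\<^sub>R J x" by (simp add: scaleR_add_left[symmetric])
    show ?thesis unfolding w'_def w_def
      by (simp add: Jdiff Jscale algebra_simps power2_eq_square scaleR_add_right e1 e2)
  qed
  have pos: "1 + \<gamma>^2 \<noteq> 0" using zero_le_power2[of \<gamma>] by linarith
  have kk: "k + k = 0"
  proof (rule ccontr)
    assume kk: "k + k \<noteq> 0"
    have "P w' a = 0" using P_hom_other[OF w', of a] kk by (auto simp: add.assoc)
    moreover have "P w a = 0" using P_hom_other[OF w, of a] k0 by auto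
    moreover have "P x a = x" using P_hom_same[OF x] .
    ultimately have "(1 + \<gamma>^2) *\<^sub>R x = 0" using w'eq by (simp add: P_diff P_neg P_scale)
    then show False using pos x0 by simp
  qed
  have "\<gamma> = 0"
  proof (rule ccontr)
    assume g0: "\<gamma> \<noteq> 0"
    have "P w' (a + k) = 0" using P_hom_other[OF w', of "a + k"] kk k0 by (auto simp: add.assoc)
    moreover have "P w (a + k) = w" using P_hom_same[OF w] .
    moreover have "P x (a + k) = 0" using P_hom_other[OF x, of "a + k"] k0 by auto
    ultimately have "(2 * \<gamma>) *\<^sub>R w = 0" using w'eq by (simp add: P_diff P_neg P_scale)
    then have "w = 0" using g0 by simp
    then have Jxg: "J x = \<gamma> *\<^sub>R x" unfolding w_def by simp
    have "- x = J (J x)" by simp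
    also have "\<dots> = (\<gamma> * \<gamma>) *\<^sub>R x" using Jxg by (simp add: Jscale)
    finally have e: "- x = (\<gamma> * \<gamma>) *\<^sub>R x" .
    have "(1 + \<gamma>^2) *\<^sub>R x = x + (\<gamma> * \<gamma>) *\<^sub>R x" by (simp add: power2_eq_square scaleR_add_left)
    also have "\<dots> = 0" using e by (metis add.right_inverse diff_minus_eq_add diff_self minus_diff_eq)
    finally have "(1 + \<gamma>^2) *\<^sub>R x = 0" .
    then show False using pos x0 by simp
  qed
  then have "\<alpha> = 0" using \<open>\<beta> \<noteq> 0\<close> unfolding \<gamma>_def by simp
  have "J y \<in> V (g + k)" if "y \<in> V g" for g y
  proof -
    have "\<beta> *\<^sub>R J y \<in> V (g + k)" using cV[OF that] \<open>\<alpha> = 0\<close> by simp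
    from Vscale[OF this, of "1/\<beta>"] show ?thesis using \<open>\<beta> \<noteq> 0\<close> by simp
  qed
  then show ?thesis using k0 kk by blast
qed


lemma case1: assumes "\<forall>g. J ` V g \<subseteq> V g" shows "rcentroid UNIV m = cent_comp m V 0"
proof
  show "cent_comp m V 0 \<subseteq> rcentroid UNIV m" unfolding cent_comp_def by blast
  show "rcentroid UNIV m \<subseteq> cent_comp m V 0"
  proof
    fix c assume c: "c \<in> rcentroid UNIV m"
    obtain a b where cab: "c = (\<lambda>x. a *\<^sub>R x + b *\<^sub>R J x)" using rcent_form[OF c] by blast
    have "c ` V g \<subseteq> V (0 + g)" for g
      using assms by (auto simp: cab intro!: Vadd Vscale)
    then show "c \<in> cent_comp m V 0" unfolding cent_comp_def using c by blast
  qed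
qed

definition Cm :: "complex \<Rightarrow> 'b \<Rightarrow> 'b" where "Cm z x = Re z *\<^sub>R x + Im z *\<^sub>R J x"

lemma Cm_mult: "Cm (z * w) x = Cm z (Cm w x)"
proof -
  have "Cm z (Cm w x) = (Re z * Re w - Im z * Im w) *\<^sub>R x + (Re z * Im w + Im z * Re w) *\<^sub>R J x"
    by (simp add: Cm_def Jadd Jscale scaleR_add_right scaleR_add_left scaleR_diff_left algebra_simps)
  then show ?thesis by (simp add: Cm_def)
qed

lemma Cm_1[simp]: "Cm 1 x = x" by (simp add: Cm_def)
lemma Cm_ii: "Cm \<i> x = J x" by (simp add: Cm_def)
lemma Cm_of_real: "Cm (of_real r) x = r *\<^sub>R x" by (simp add: Cm_def)
lemma Cm_0[simp]: "Cm z 0 = 0" by (simp add: Cm_def)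
lemma linCm: "linear (Cm z)"
  by (intro linearI) (simp_all add: Cm_def Jadd Jscale scaleR_add_right algebra_simps)
lemma Cm_add: "Cm z (x + y) = Cm z x + Cm z y" using linear_add[OF linCm] .
lemma Cm_scale: "Cm z (r *\<^sub>R x) = r *\<^sub>R Cm z x" using linear_scale[OF linCm] .
lemma Cm_addl: "Cm (z + w) x = Cm z x + Cm w x" by (simp add: Cm_def scaleR_add_left algebra_simps)
lemma Cm_J: "Cm z (J x) = J (Cm z x)" by (simp add: Cm_def Jadd Jscale)
lemma Cm_inv: "z \<noteq> 0 \<Longrightarrow> Cm (inverse z) (Cm z x) = x"
  by (simp flip: Cm_mult)
lemma Cm_inj: "z \<noteq> 0 \<Longrightarrow> Cm z x = 0 \<Longrightarrow> x = 0"
  using Cm_inv[of z x] by simp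
lemma mCl: "m (Cm z x) y = Cm z (m x y)" by (simp add: Cm_def maddl mscl mJl)
lemma mCr: "m x (Cm z y) = Cm z (m x y)" by (simp add: Cm_def maddr mscr mJr)
lemma scale_Cm: "r *\<^sub>R Cm z x = Cm (of_real r * z) x" by (simp add: Cm_mult Cm_of_real)

lemma lin_ext: assumes "linear f" "linear g" "\<And>a x. x \<in> V a \<Longrightarrow> f x = g x" shows "f x = g x"
proof -
  have "f x = (\<Sum>a\<in>{a. P x a \<noteq> 0}. f (P x a))" using linear_sum[OF assms(1)] P_sum[of x] by metis
  also have "\<dots> = (\<Sum>a\<in>{a. P x a \<noteq> 0}. g (P x a))" by (rule sum.cong[OF refl], rule assms(3), rule P_V)
  also have "\<dots> = g x" using linear_sum[OF assms(2)] P_sum[of x] by metis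
  finally show ?thesis .
qed

lemma bil_expand:
  fixes H :: "'b \<Rightarrow> 'b \<Rightarrow> 'b"
  assumes H1: "\<And>x. linear (H x)" and H2: "\<And>y. linear (\<lambda>x. H x y)"
  shows "H x y = (\<Sum>a\<in>{a. P x a \<noteq> 0}. \<Sum>b\<in>{b. P y b \<noteq> 0}. H (P x a) (P y b))"
proof -
  let ?A = "{a. P x a \<noteq> 0}" and ?B = "{b. P y b \<noteq> 0}"
  have "H x y = H (\<Sum>a\<in>?A. P x a) y" using P_sum[of x] by simp
  also have "\<dots> = (\<Sum>a\<in>?A. H (P x a) y)" using linear_sum[OF H2] by simp
  also have "\<dots> = (\<Sum>a\<in>?A. H (P x a) (\<Sum>b\<in>?B. P y b))" using P_sum[of y] by simp
  also have "\<dots> = (\<Sum>a\<in>?A. \<Sum>b\<in>?B. H (P x a) (P y b))" by (rule sum.cong[OF refl], rule linear_sum[OF H1])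
  finally show ?thesis .
qed

end

locale gr2 = gr J m V for J :: "'b::real_vector \<Rightarrow> 'b" and m and V :: "'g::ab_group_add \<Rightarrow> 'b set" +
  fixes h :: 'g
  assumes h0: "h \<noteq> 0" and hh: "h + h = 0" and JV: "\<And>g y. y \<in> V g \<Longrightarrow> J y \<in> V (g + h)"
begin

lemma hneg: "- h = h" using hh by (rule minus_unique)
lemma ghh[simp]: "g + h + h = g" by (simp add: add.assoc hh)
lemma gnh: "g + h \<noteq> g" using h0 by simp

lemma JV_inv: "y \<in> V (g + h) \<Longrightarrow> y \<in> J ` V g"
proof -
  assume y: "y \<in> V (g + h)"
  have "- J y \<in> V g" using Vneg[OF JV[OF y]] by simp
  moreover have "y = J (- J y)" by (simp add: Jneg)
  ultimately show ?thesis by blast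
qed

lemma cent0: "cent_comp m V 0 = {(\<lambda>x. r *\<^sub>R x) | r. True}"
proof
  show "{(\<lambda>x. r *\<^sub>R x) | r. True} \<subseteq> cent_comp m V 0"
  proof
    fix c :: "'b \<Rightarrow> 'b" assume "c \<in> {(\<lambda>x. r *\<^sub>R x) | r. True}"
    then obtain r where c: "c = (\<lambda>x. r *\<^sub>R x + 0 *\<^sub>R J x)" by auto
    have "c \<in> rcentroid UNIV m" unfolding c by (rule scal_rcent)
    moreover have "c ` V g \<subseteq> V (0 + g)" for g by (auto simp: c intro: Vscale)
    ultimately show "c \<in> cent_comp m V 0" unfolding cent_comp_def by blast
  qed
  show "cent_comp m V 0 \<subseteq> {(\<lambda>x. r *\<^sub>R x) | r. True}"
  proof
    fix c assume c: "c \<in> cent_comp m V 0"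
    then have cr: "c \<in> rcentroid UNIV m" and cV: "\<And>g y. y \<in> V g \<Longrightarrow> c y \<in> V g"
      unfolding cent_comp_def by auto
    obtain a b where cab: "c = (\<lambda>x. a *\<^sub>R x + b *\<^sub>R J x)" using rcent_form[OF cr] by blast
    obtain g y where y: "y \<in> V g" "y \<noteq> 0" using hom_nonzero by blast
    have "b *\<^sub>R J y \<in> V g" using Vdiff[OF cV[OF y(1)] Vscale[OF y(1), of a]] cab by simp
    moreover have "b *\<^sub>R J y \<in> V (g + h)" using Vscale[OF JV[OF y(1)]] .
    ultimately have "b *\<^sub>R J y = 0" using V_inter[OF gnh[symmetric]] by blast
    then have "b = 0" using y(2) Jinj by auto
    then show "c \<in> {(\<lambda>x. r *\<^sub>R x) | r. True}" using cab by auto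
  qed
qed

lemma centh: "cent_comp m V h = {(\<lambda>x. r *\<^sub>R J x) | r. True}"
proof
  show "{(\<lambda>x. r *\<^sub>R J x) | r. True} \<subseteq> cent_comp m V h"
  proof
    fix c :: "'b \<Rightarrow> 'b" assume "c \<in> {(\<lambda>x. r *\<^sub>R J x) | r. True}"
    then obtain r where c: "c = (\<lambda>x. 0 *\<^sub>R x + r *\<^sub>R J x)" by auto
    have "c \<in> rcentroid UNIV m" unfolding c by (rule scal_rcent)
    moreover have "c ` V g \<subseteq> V (h + g)" for g using JV by (auto simp: c add.commute intro: Vscale)
    ultimately show "c \<in> cent_comp m V h" unfolding cent_comp_def by blast
  qed
  show "cent_comp m V h \<subseteq> {(\<lambda>x. r *\<^sub>R J x) | r. True}"
  proof
    fix c assume c: "c \<in> cent_comp m V h"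
    then have cr: "c \<in> rcentroid UNIV m" and cV: "\<And>g y. y \<in> V g \<Longrightarrow> c y \<in> V (g + h)"
      unfolding cent_comp_def by (auto simp: add.commute)
    obtain a b where cab: "c = (\<lambda>x. a *\<^sub>R x + b *\<^sub>R J x)" using rcent_form[OF cr] by blast
    obtain g y where y: "y \<in> V g" "y \<noteq> 0" using hom_nonzero by blast
    have "a *\<^sub>R y \<in> V (g + h)" using Vdiff[OF cV[OF y(1)] Vscale[OF JV[OF y(1)], of b]] cab by simp
    moreover have "a *\<^sub>R y \<in> V g" using Vscale[OF y(1)] .
    ultimately have "a *\<^sub>R y = 0" using V_inter[OF gnh[symmetric]] by blast
    then have "a = 0" using y(2) by auto
    then show "c \<in> {(\<lambda>x. r *\<^sub>R J x) | r. True}" using cab by auto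
  qed
qed

lemma gcs: "graded_central_simple m V"
  unfolding graded_central_simple_def
  using span_prod cent0 rideal_triv by (auto simp: graded_ideal_def)


subsection \<open>Representatives, character, twisting\<close>

definition rep :: "'g \<Rightarrow> 'g" where "rep g = (SOME k. k \<in> coset h g)"

lemma coset_h: "coset h (g + h) = coset h g" by (auto simp: coset_def)
lemma coset_eq: "coset h a = coset h b \<longleftrightarrow> b = a \<or> b = a + h"
  using gnh by (auto simp: coset_def)

lemma rep_in: "rep g = g \<or> rep g = g + h"
proof -
  have "rep g \<in> coset h g" unfolding rep_def by (rule someI[of _ g]) (simp add: coset_def)
  then show ?thesis by (simp add: coset_def)
qed
lemma rep_h[simp]: "rep (g + h) = rep g" by (simp add: rep_def coset_h)
lemma rep_rep[simp]: "rep (rep g) = rep g" using rep_in[of g] by auto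
lemma rep_eq: "rep a = rep b \<longleftrightarrow> b = a \<or> b = a + h"
proof
  assume "rep a = rep b"
  then show "b = a \<or> b = a + h" using rep_in[of a] rep_in[of b] by (metis ghh)
qed auto
lemma rep_coset: "coset h (rep g) = coset h g" using rep_in[of g] coset_h by auto
lemma nrep: "rep g \<noteq> g \<Longrightarrow> g = rep g + h" using rep_in[of g] by auto
lemma rep_add: "rep (rep a + rep b) = rep (a + b)"
  using rep_in[of a] rep_in[of b] by (auto simp: add_ac) (metis add.commute add.left_commute ghh rep_h)+

definition chi :: "'g \<Rightarrow> complex" where
  "chi = (SOME \<chi>. (\<forall>a b. \<chi> (a+b) = \<chi> a * \<chi> b) \<and> (\<forall>a. \<chi> a \<noteq> 0) \<and> \<chi> h = -1)"

lemma chi_props: "(\<forall>a b. chi (a+b) = chi a * chi b) \<and> (\<forall>a. chi a \<noteq> 0) \<and> chi h = -1"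
  unfolding chi_def by (rule someI_ex[OF char_exists[OF h0 hh]])
lemma chi_add: "chi (a + b) = chi a * chi b" using chi_props by blast
lemma chi_nz: "chi a \<noteq> 0" using chi_props by blast
lemma chi_h: "chi h = -1" using chi_props by blast

definition u :: "'g \<Rightarrow> complex" where "u g = csqrt (chi g)"
lemma u_sq: "(u g)^2 = chi g" by (simp add: u_def)
lemma u_nz: "u g \<noteq> 0" using chi_nz by (simp add: u_def)

definition uR :: "'g \<Rightarrow> complex" where "uR g = u (rep g)"
definition e :: "'g \<Rightarrow> complex" where "e g = u g / uR g"
definition tau :: "'g \<Rightarrow> 'g \<Rightarrow> real" where "tau a b = Re (u (a + b) / (u a * u b))"

lemma uR_nz: "uR g \<noteq> 0" by (simp add: uR_def u_nz)
lemma uR_h[simp]: "uR (g + h) = uR g" by (simp add: uR_def)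
lemma uR_e: "uR g * e g = u g" using uR_nz by (simp add: e_def)
lemma e_nz: "e g \<noteq> 0" using u_nz uR_nz by (simp add: e_def)

lemma sq_m1: fixes z :: complex shows "z^2 = -1 \<Longrightarrow> z = \<i> \<or> z = - \<i>"
proof -
  assume "z^2 = -1"
  then have "(z - \<i>) * (z + \<i>) = 0" by (simp add: algebra_simps power2_eq_square)
  then show ?thesis by (auto simp: eq_neg_iff_add_eq_0)
qed

lemma sq_1: fixes z :: complex shows "z^2 = 1 \<Longrightarrow> z = 1 \<or> z = - 1"
proof -
  assume "z^2 = 1"
  then have "(z - 1) * (z + 1) = 0" by (simp add: algebra_simps power2_eq_square)
  then show ?thesis by (auto simp: eq_neg_iff_add_eq_0)
qed

lemma e_rep: "rep g = g \<Longrightarrow> e g = 1" using u_nz by (simp add: e_def uR_def)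
lemma e_nrep: assumes "rep g \<noteq> g" shows "e g = \<i> \<or> e g = - \<i>"
proof -
  have g: "g = rep g + h" using nrep[OF assms] .
  have "(u g)^2 = - ((uR g)^2)" by (subst g) (simp add: u_sq chi_add chi_h uR_def)
  then have "(e g)^2 = -1" using uR_nz by (simp add: e_def power_divide)
  then show ?thesis by (rule sq_m1)
qed

lemma Cm_neg: "Cm (- z) x = - Cm z x" by (simp add: Cm_def)

lemma e_V: assumes x: "x \<in> V g" shows "Cm (e g) x \<in> V (rep g)"
proof (cases "rep g = g")
  case True then show ?thesis using x e_rep by simp
next
  case False
  have JxV: "J x \<in> V (rep g)" using JV[OF x] nrep[OF False] by (metis ghh)
  from e_nrep[OF False] show ?thesis
  proof
    assume "e g = \<i>" then show ?thesis using JxV by (simp add: Cm_ii)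
  next
    assume "e g = - \<i>" then show ?thesis using Vneg[OF JxV] by (simp add: Cm_ii Cm_neg)
  qed
qed

lemma e_V_inv: assumes y: "y \<in> V (rep g)" shows "Cm (inverse (e g)) y \<in> V g"
proof (cases "rep g = g")
  case True then show ?thesis using y e_rep by simp
next
  case False
  have JyV: "J y \<in> V g" using JV[OF y] nrep[OF False] by simp
  have i: "inverse \<i> = - \<i>" "inverse (- \<i>) = \<i>" by (simp_all add: inverse_eq_divide)
  from e_nrep[OF False] show ?thesis
  proof
    assume "e g = \<i>" then show ?thesis using Vneg[OF JyV] by (simp add: i Cm_ii Cm_neg)
  next
    assume "e g = - \<i>" then show ?thesis using JyV by (simp add: i Cm_ii Cm_neg)
  qed
qed

lemma tau_eq: "u (a + b) = of_real (tau a b) * (u a * u b)" and tau_pm: "tau a b = 1 \<or> tau a b = -1"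
proof -
  define r where "r = u (a + b) / (u a * u b)"
  have "r^2 = chi (a + b) / (chi a * chi b)" by (simp add: r_def power_divide power_mult_distrib u_sq)
  also have "\<dots> = 1" using chi_nz by (simp add: chi_add)
  finally have "r = 1 \<or> r = -1" by (rule sq_1)
  then have "tau a b = 1 \<and> r = 1 \<or> tau a b = -1 \<and> r = -1" unfolding tau_def r_def[symmetric] by auto
  moreover have "u (a + b) = r * (u a * u b)" using u_nz by (simp add: r_def)
  ultimately show "u (a + b) = of_real (tau a b) * (u a * u b)" "tau a b = 1 \<or> tau a b = -1" by auto
qed


definition BM :: "('g \<Rightarrow> complex) \<Rightarrow> 'b \<Rightarrow> 'b" where
  "BM z x = (\<Sum>g\<in>{g. P x g \<noteq> 0}. Cm (z g) (P x g))"

lemma BM_F: assumes "finite F" "{g. P x g \<noteq> 0} \<subseteq> F"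
  shows "BM z x = (\<Sum>g\<in>F. Cm (z g) (P x g))"
  unfolding BM_def by (rule sum.mono_neutral_left) (use assms in auto)

lemma linBM: "linear (BM z)"
proof (rule linearI)
  fix x y
  let ?F = "{g. P x g \<noteq> 0} \<union> {g. P y g \<noteq> 0}"
  have f: "finite ?F" by simp
  have "BM z (x + y) = (\<Sum>g\<in>?F. Cm (z g) (P (x+y) g))"
    by (rule BM_F[OF f]) (auto simp: P_add)
  also have "\<dots> = (\<Sum>g\<in>?F. Cm (z g) (P x g)) + (\<Sum>g\<in>?F. Cm (z g) (P y g))"
    by (simp add: P_add Cm_add sum.distrib)
  also have "\<dots> = BM z x + BM z y" using BM_F[OF f, of x z] BM_F[OF f, of y z] by auto
  finally show "BM z (x + y) = BM z x + BM z y" .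
next
  fix r x
  let ?F = "{g. P x g \<noteq> 0}"
  have "BM z (r *\<^sub>R x) = (\<Sum>g\<in>?F. Cm (z g) (P (r *\<^sub>R x) g))"
    by (rule BM_F) (auto simp: P_scale)
  also have "\<dots> = r *\<^sub>R BM z x" by (simp add: P_scale Cm_scale scaleR_sum_right BM_def)
  finally show "BM z (r *\<^sub>R x) = r *\<^sub>R BM z x" .
qed

lemma BM_hom: assumes "x \<in> V a" shows "BM z x = Cm (z a) x"
proof -
  have "BM z x = (\<Sum>g\<in>{a}. Cm (z g) (P x g))"
    by (rule BM_F) (use P_hom[OF assms] in auto)
  then show ?thesis using P_hom_same[OF assms] by simp
qed

lemma BM_block: assumes zc: "\<And>g. z (g + h) = z g" and v: "v \<in> V g"
  shows "BM z (Cm c v) = Cm (z g * c) v"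
proof -
  have "BM z (Cm c v) = BM z (Re c *\<^sub>R v) + BM z (Im c *\<^sub>R J v)"
    by (simp add: Cm_def linear_add[OF linBM])
  also have "\<dots> = Re c *\<^sub>R Cm (z g) v + Im c *\<^sub>R Cm (z (g + h)) (J v)"
    by (simp add: linear_scale[OF linBM] BM_hom[OF v] BM_hom[OF JV[OF v]])
  also have "\<dots> = Cm (z g) (Cm c v)" by (simp add: zc Cm_def Jadd Jscale scaleR_add_right scaleR_diff_right algebra_simps)
  finally show ?thesis by (simp add: Cm_mult)
qed

lemma BM_J: assumes zc: "\<And>g. z (g + h) = z g" shows "BM z (J x) = J (BM z x)"
proof (rule lin_ext[where f="\<lambda>x. BM z (J x)" and g="\<lambda>x. J (BM z x)"])
  show "linear (\<lambda>x. BM z (J x))" using linear_compose[OF linJ linBM] by (simp add: o_def)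
  show "linear (\<lambda>x. J (BM z x))" using linear_compose[OF linBM linJ] by (simp add: o_def)
  fix a x assume x: "x \<in> V a"
  show "BM z (J x) = J (BM z x)" using BM_hom[OF x] BM_hom[OF JV[OF x]] zc Cm_J by simp
qed

lemma BM_comp: assumes zc: "\<And>g. z (g + h) = z g" shows "BM z (BM w x) = BM (\<lambda>g. z g * w g) x"
proof (rule lin_ext[where f="\<lambda>x. BM z (BM w x)"])
  show "linear (\<lambda>x. BM z (BM w x))" using linear_compose[OF linBM linBM] by (simp add: o_def)
  show "linear (BM (\<lambda>g. z g * w g))" by (rule linBM)
  fix a x assume x: "x \<in> V a"
  show "BM z (BM w x) = BM (\<lambda>g. z g * w g) x" using BM_hom[OF x] BM_block[of z, OF zc x] by simp
qed

lemma BM_1: "BM (\<lambda>g. 1) x = x"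
proof (rule lin_ext[where f="BM (\<lambda>g. 1)" and g="\<lambda>x. x"])
  show "linear (BM (\<lambda>g. 1))" by (rule linBM)
  show "linear (\<lambda>x::'b. x)" by (rule linear_id[unfolded id_def])
qed (simp add: BM_hom)

definition D :: "'b \<Rightarrow> 'b" where "D = BM (\<lambda>g. inverse (uR g))"
definition Di :: "'b \<Rightarrow> 'b" where "Di = BM uR"

lemma linD: "linear D" unfolding D_def by (rule linBM)
lemma linDi: "linear Di" unfolding Di_def by (rule linBM)
lemma D_Di[simp]: "D (Di x) = x"
  unfolding D_def Di_def using BM_comp[of "\<lambda>g. inverse (uR g)" uR x] BM_1 uR_nz by simp
lemma Di_D[simp]: "Di (D x) = x"
  unfolding D_def Di_def using BM_comp[of uR "\<lambda>g. inverse (uR g)" x] BM_1 uR_nz by simp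
lemma D_J: "D (J x) = J (D x)" unfolding D_def by (rule BM_J) simp
lemma Di_J: "Di (J x) = J (Di x)" unfolding Di_def by (rule BM_J) simp
lemma Di_e: "x \<in> V a \<Longrightarrow> Di (Cm (e a) x) = Cm (u a) x"
  unfolding Di_def using BM_block[of uR x a "e a"] uR_e by simp
lemma D_u: "v \<in> V k \<Longrightarrow> D (Cm (u k) v) = Cm (e k) v"
  unfolding D_def using BM_block[of "\<lambda>g. inverse (uR g)" v k "u k"] by (simp add: e_def divide_inverse mult.commute)
lemma D_inj: "D x = D y \<Longrightarrow> x = y" using Di_D by metis

subsection \<open>The real form\<close>

definition Pr :: "'b \<Rightarrow> 'b" where
  "Pr x = (\<Sum>g\<in>{g. P x g \<noteq> 0}. if rep g = g then P x g else 0)"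

lemma Pr_F: assumes "finite F" "{g. P x g \<noteq> 0} \<subseteq> F"
  shows "Pr x = (\<Sum>g\<in>F. if rep g = g then P x g else 0)"
  unfolding Pr_def by (rule sum.mono_neutral_left) (use assms in auto)

lemma linPr: "linear Pr"
proof (rule linearI)
  fix x y
  let ?F = "{g. P x g \<noteq> 0} \<union> {g. P y g \<noteq> 0}"
  have f: "finite ?F" by simp
  have "Pr (x + y) = (\<Sum>g\<in>?F. if rep g = g then P (x+y) g else 0)"
    by (rule Pr_F[OF f]) (auto simp: P_add)
  also have "\<dots> = (\<Sum>g\<in>?F. if rep g = g then P x g else 0) + (\<Sum>g\<in>?F. if rep g = g then P y g else 0)"
    unfolding sum.distrib[symmetric] by (rule sum.cong[OF refl]) (simp add: P_add)
  also have "\<dots> = Pr x + Pr y" using Pr_F[OF f, of x] Pr_F[OF f, of y] by auto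
  finally show "Pr (x + y) = Pr x + Pr y" .
next
  fix r x
  let ?F = "{g. P x g \<noteq> 0}"
  have "Pr (r *\<^sub>R x) = (\<Sum>g\<in>?F. if rep g = g then P (r *\<^sub>R x) g else 0)"
    by (rule Pr_F) (auto simp: P_scale)
  also have "\<dots> = r *\<^sub>R Pr x" unfolding Pr_def scaleR_sum_right by (rule sum.cong[OF refl]) (simp add: P_scale)
  finally show "Pr (r *\<^sub>R x) = r *\<^sub>R Pr x" .
qed

lemma Pr_hom: assumes "x \<in> V a" shows "Pr x = (if rep a = a then x else 0)"
proof -
  have "Pr x = (\<Sum>g\<in>{a}. if rep g = g then P x g else 0)"
    by (rule Pr_F) (use P_hom[OF assms] in auto)
  then show ?thesis using P_hom_same[OF assms] by simp
qed

lemma rep_nrep_iff: "rep (a + h) = a + h \<longleftrightarrow> rep a \<noteq> a"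
  using rep_in[of a] gnh[of a] by auto

lemma Pr_J: "Pr (J x) = J (x - Pr x)"
proof (rule lin_ext[where f="\<lambda>x. Pr (J x)" and g="\<lambda>x. J (x - Pr x)"])
  show "linear (\<lambda>x. Pr (J x))" using linear_compose[OF linJ linPr] by (simp add: o_def)
  have "linear (\<lambda>x. x - Pr x)" using linPr by (intro linearI) (auto simp: linear_add linear_scale algebra_simps)
  then show "linear (\<lambda>x. J (x - Pr x))" using linear_compose[OF _ linJ] by (auto simp: o_def)
  fix a x assume x: "x \<in> V a"
  show "Pr (J x) = J (x - Pr x)" using Pr_hom[OF x] Pr_hom[OF JV[OF x]] rep_nrep_iff[of a] by auto
qed

definition S :: "'b set" where "S = {x. Pr x = x}"

lemma P_Pr: "P (Pr x) = (\<lambda>g. if rep g = g then P x g else 0)"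
  by (rule P_unique[where F="{g. P x g \<noteq> 0}"]) (auto simp: Pr_def V0)

lemma S_iff: "x \<in> S \<longleftrightarrow> (\<forall>g. rep g \<noteq> g \<longrightarrow> P x g = 0)"
proof
  assume "x \<in> S" then have "Pr x = x" by (simp add: S_def)
  then show "\<forall>g. rep g \<noteq> g \<longrightarrow> P x g = 0" using P_Pr[of x] by (metis)
next
  assume a: "\<forall>g. rep g \<noteq> g \<longrightarrow> P x g = 0"
  have "Pr x = x" by (rule eq_by_P) (use a in \<open>auto simp: P_Pr\<close>)
  then show "x \<in> S" by (simp add: S_def)
qed

lemma subS: "subspace S"
proof -
  have "linear (\<lambda>x. Pr x - x)" using linPr by (intro linearI) (auto simp: linear_add linear_scale algebra_simps)
  from lin_preimage[OF this subspace_single_0] show ?thesis by (simp add: S_def)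
qed

lemma Pr_S: "Pr x \<in> S" using P_Pr S_iff by auto
lemma S_Pr: "x \<in> S \<Longrightarrow> Pr x = x" by (simp add: S_def)
lemma V_rep_S: "y \<in> V (rep g) \<Longrightarrow> y \<in> S" using Pr_hom[of y "rep g"] by (simp add: S_def)
lemma Pr_JS: "s \<in> S \<Longrightarrow> Pr (J s) = 0" by (simp add: Pr_J S_Pr)
lemma Pr_sum2: "a \<in> S \<Longrightarrow> b \<in> S \<Longrightarrow> Pr (a + J b) = a"
  using linear_add[OF linPr, of a "J b"] by (simp add: Pr_JS S_Pr)

definition m' :: "'b \<Rightarrow> 'b \<Rightarrow> 'b" where "m' p q = D (m (Di p) (Di q))"

lemma linm'r: "linear (m' p)"
  using linear_compose[OF linear_compose[OF linDi linmr] linD] by (simp add: o_def m'_def[abs_def])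
lemma linm'l: "linear (\<lambda>p. m' p q)"
  using linear_compose[OF linear_compose[OF linDi linml[of "Di q"]] linD] by (simp add: o_def m'_def)
lemma m'Jl: "m' (J p) q = J (m' p q)" by (simp add: m'_def Di_J mJl D_J)
lemma m'Jr: "m' p (J q) = J (m' p q)" by (simp add: m'_def Di_J mJr D_J)

lemma m'_key: assumes x: "x \<in> V a" and y: "y \<in> V b"
  shows "m' (Cm (e a) x) (Cm (e b) y) = tau a b *\<^sub>R Cm (e (a + b)) (m x y)"
proof -
  have "m' (Cm (e a) x) (Cm (e b) y) = D (m (Cm (u a) x) (Cm (u b) y))"
    by (simp add: m'_def Di_e[OF x] Di_e[OF y])
  also have "m (Cm (u a) x) (Cm (u b) y) = Cm (u a * u b) (m x y)" by (simp add: mCl mCr mult.commute flip: Cm_mult)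
  also have "u a * u b = of_real (tau a b) * u (a + b)"
    using tau_eq[of a b] tau_pm[of a b] by auto
  also have "Cm (of_real (tau a b) * u (a + b)) (m x y) = tau a b *\<^sub>R Cm (u (a + b)) (m x y)"
    by (simp add: Cm_mult Cm_of_real)
  also have "D \<dots> = tau a b *\<^sub>R D (Cm (u (a + b)) (m x y))" by (rule linear_scale[OF linD])
  also have "D (Cm (u (a + b)) (m x y)) = Cm (e (a + b)) (m x y)" by (rule D_u[OF mV[OF x y]])
  finally show ?thesis .
qed

lemma m'_rep: assumes x: "x \<in> V r" "rep r = r" and y: "y \<in> V s" "rep s = s"
  shows "m' x y \<in> V (rep (r + s))"
proof -
  have "m' x y = tau r s *\<^sub>R Cm (e (r + s)) (m x y)"
    using m'_key[OF x(1) y(1)] e_rep[OF x(2)] e_rep[OF y(2)] by simp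
  then show ?thesis using Vscale[OF e_V[OF mV[OF x(1) y(1)]]] by simp
qed

lemma m'_S: assumes p: "p \<in> S" and q: "q \<in> S" shows "m' p q \<in> S"
proof -
  have "m' p q = (\<Sum>a\<in>{a. P p a \<noteq> 0}. \<Sum>b\<in>{b. P q b \<noteq> 0}. m' (P p a) (P q b))"
    by (rule bil_expand[OF linm'r linm'l])
  also have "\<dots> \<in> S"
  proof (intro subspace_sum[OF subS])
    fix a b assume a: "a \<in> {a. P p a \<noteq> 0}" and b: "b \<in> {b. P q b \<noteq> 0}"
    have "rep a = a" "rep b = b" using a b p q S_iff by auto
    then show "m' (P p a) (P q b) \<in> S" using m'_rep[OF P_V _ P_V] V_rep_S by blast
  qed
  finally show ?thesis .
qed


subsection \<open>Cocycle and loop isomorphism\<close>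

lemma tau_nz: "tau a b \<noteq> 0" using tau_pm[of a b] by auto
lemma tau_sq: "tau a b * tau a b = 1" using tau_pm[of a b] by auto

lemma sym_tau: "sym_cocycle tau"
  unfolding sym_cocycle_def
proof (intro conjI allI)
  fix a b show "tau a b \<noteq> 0" by (rule tau_nz)
  show "tau a b = tau b a" by (simp add: tau_def add.commute mult.commute)
next
  fix a b c
  have "u (a + b + c) = of_real (tau a b * tau (a + b) c) * (u a * u b * u c)"
    using tau_eq[of "a + b" c] tau_eq[of a b] by (simp add: algebra_simps)
  moreover have "u (a + b + c) = of_real (tau b c * tau a (b + c)) * (u a * u b * u c)"
    using tau_eq[of a "b + c"] tau_eq[of b c] by (simp add: algebra_simps add.assoc)
  moreover have "u a * u b * u c \<noteq> 0" using u_nz by simp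
  ultimately have "complex_of_real (tau a b * tau (a + b) c) = of_real (tau b c * tau a (b + c))"
    by (metis mult_right_cancel)
  then show "tau a b * tau (a + b) c = tau b c * tau a (b + c)" by (rule of_real_eq_iff[THEN iffD1])
qed

definition W :: "'g set \<Rightarrow> 'b set" where "W C = V (SOME k. k \<in> C)"
lemma W_coset[simp]: "W (coset h g) = V (rep g)" by (simp add: W_def rep_def)

definition phi :: "'b \<Rightarrow> 'g \<Rightarrow> 'b" where "phi x = (\<lambda>g. Cm (e g) (P x g))"

lemma phi_supp: "{g. phi x g \<noteq> 0} = {g. P x g \<noteq> 0}"
  using Cm_inj[OF e_nz] by (auto simp: phi_def)

lemma phi_carrier: "phi x \<in> loop_carrier h W"
  unfolding loop_carrier_def using phi_supp[of x] by (simp add: phi_def e_V)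

lemma Cm_e_inv: "Cm (e g) (Cm (inverse (e g)) y) = y"
  using e_nz by (simp flip: Cm_mult)

lemma phi_surj: assumes f: "f \<in> loop_carrier h W"
  shows "\<exists>x. phi x = f \<and> (\<forall>k. P x k = Cm (inverse (e k)) (f k))"
proof -
  have fin: "finite {g. f g \<noteq> 0}" and fV: "\<And>g. f g \<in> V (rep g)"
    using f by (auto simp: loop_carrier_def)
  define x where "x = (\<Sum>g\<in>{g. f g \<noteq> 0}. Cm (inverse (e g)) (f g))"
  have Px: "P x = (\<lambda>g. Cm (inverse (e g)) (f g))"
    by (rule P_unique[OF _ fin]) (auto simp: x_def e_V_inv[OF fV])
  then have "phi x = f" by (simp add: phi_def Cm_e_inv)
  then show ?thesis using Px by auto
qed

lemma phi_iso: "graded_iso_loop m V h m' W tau phi"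
  unfolding graded_iso_loop_def
proof (intro conjI allI)
  show "bij_betw phi UNIV (loop_carrier h W)"
    unfolding bij_betw_def
  proof
    show "inj phi"
    proof (rule injI)
      fix x y assume "phi x = phi y"
      then have "Cm (inverse (e g)) (phi x g) = Cm (inverse (e g)) (phi y g)" for g by simp
      then have "P x g = P y g" for g using e_nz by (simp add: phi_def flip: Cm_mult)
      then show "x = y" by (rule eq_by_P)
    qed
    show "range phi = loop_carrier h W" using phi_carrier phi_surj by blast
  qed
next
  fix x y show "phi (x + y) = (\<lambda>k. phi x k + phi y k)" by (simp add: phi_def P_add Cm_add)
next
  fix r x show "phi (r *\<^sub>R x) = (\<lambda>k. r *\<^sub>R phi x k)" by (simp add: phi_def P_scale Cm_scale)
next
  fix x y
  show "phi (m x y) = loop_mul m' tau (phi x) (phi y)"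
  proof
    fix k
    have "loop_mul m' tau (phi x) (phi y) k
        = (\<Sum>a\<in>{a. P x a \<noteq> 0}. tau a (k - a) *\<^sub>R m' (Cm (e a) (P x a)) (Cm (e (k - a)) (P y (k - a))))"
      unfolding loop_mul_def phi_supp by (simp add: phi_def)
    also have "\<dots> = (\<Sum>a\<in>{a. P x a \<noteq> 0}. Cm (e k) (m (P x a) (P y (k - a))))"
    proof (rule sum.cong[OF refl])
      fix a
      have "tau a (k - a) *\<^sub>R m' (Cm (e a) (P x a)) (Cm (e (k - a)) (P y (k - a)))
          = (tau a (k - a) * tau a (k - a)) *\<^sub>R Cm (e (a + (k - a))) (m (P x a) (P y (k - a)))"
        by (simp add: m'_key[OF P_V P_V])
      also have "\<dots> = Cm (e k) (m (P x a) (P y (k - a)))" by (simp add: tau_sq)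
      finally show "tau a (k - a) *\<^sub>R m' (Cm (e a) (P x a)) (Cm (e (k - a)) (P y (k - a))) = Cm (e k) (m (P x a) (P y (k - a)))" .
    qed
    also have "\<dots> = Cm (e k) (P (m x y) k)" by (simp add: P_mul linear_sum[OF linCm])
    finally show "phi (m x y) k = loop_mul m' tau (phi x) (phi y) k" by (simp add: phi_def)
  qed
next
  fix g
  show "phi ` V g = loop_comp h W g"
  proof
    show "phi ` V g \<subseteq> loop_comp h W g"
      unfolding loop_comp_def using phi_carrier by (auto simp: phi_def P_hom_other)
    show "loop_comp h W g \<subseteq> phi ` V g"
    proof
      fix f assume f: "f \<in> loop_comp h W g"
      then have fc: "f \<in> loop_carrier h W" and f0: "\<And>k. k \<noteq> g \<Longrightarrow> f k = 0"
        by (auto simp: loop_comp_def)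
      obtain x where x: "phi x = f" "\<And>k. P x k = Cm (inverse (e k)) (f k)" using phi_surj[OF fc] by blast
      have Pz: "\<And>k. k \<noteq> g \<Longrightarrow> P x k = 0" using x(2) f0 by simp
      have "x = sum (P x) {g}" by (rule P_sumF) (use Pz in auto)
      then have "x \<in> V g" using P_V[of x g] by simp
      then show "f \<in> phi ` V g" using x(1) by blast
    qed
  qed
qed


subsection \<open>Complexification\<close>

definition psi :: "'b \<Rightarrow> 'b \<times> 'b" where "psi x = (Pr (D x), - J (D x - Pr (D x)))"
definition psinv :: "'b \<times> 'b \<Rightarrow> 'b" where "psinv p = Di (fst p + J (snd p))"

lemma psi_S: "fst (psi x) \<in> S" "snd (psi x) \<in> S"
proof -
  show "fst (psi x) \<in> S" by (simp add: psi_def Pr_S)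
  have "Pr (- J (D x - Pr (D x))) = - J (D x - Pr (D x))"
    by (simp add: linear_neg[OF linPr] Pr_J linear_diff[OF linPr] S_Pr[OF Pr_S])
  then show "snd (psi x) \<in> S" by (simp add: psi_def S_def)
qed

lemma psi_dec: "D x = fst (psi x) + J (snd (psi x))"
  by (simp add: psi_def Jneg)

lemma psi_psinv: "a \<in> S \<Longrightarrow> b \<in> S \<Longrightarrow> psi (psinv (a, b)) = (a, b)"
  by (simp add: psi_def psinv_def Pr_sum2)

lemma psinv_psi: "psinv (psi x) = x"
  unfolding psinv_def by (subst psi_dec[symmetric]) simp

lemma psi_inj: "psi x = psi y \<Longrightarrow> x = y" using psinv_psi by metis

lemma psi_add: "psi (x + y) = (fst (psi x) + fst (psi y), snd (psi x) + snd (psi y))"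
  by (simp add: psi_def linear_add[OF linD] linear_add[OF linPr] Jadd Jdiff algebra_simps)

lemma psi_scale: "psi (r *\<^sub>R x) = (r *\<^sub>R fst (psi x), r *\<^sub>R snd (psi x))"
  by (simp add: psi_def linear_scale[OF linD] linear_scale[OF linPr] Jscale Jdiff scaleR_diff_right)

lemma psi_J: "psi (J x) = (- snd (psi x), fst (psi x))"
  by (simp add: psi_def D_J Pr_J Jdiff Jneg)

lemma psi_0: "psi 0 = (0, 0)" using psi_scale[of 0 0] by simp

lemma m'_D: "D (m x y) = m' (D x) (D y)" by (simp add: m'_def)

lemma m'_expand: "m' (a1 + J a2) (b1 + J b2) = (m' a1 b1 - m' a2 b2) + J (m' a1 b2 + m' a2 b1)"
  by (simp add: linear_add[OF linm'r] linear_add[OF linm'l] m'Jl m'Jr Jadd algebra_simps)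

lemma psi_m: "psi (m x y) = (m' (fst (psi x)) (fst (psi y)) - m' (snd (psi x)) (snd (psi y)),
                              m' (fst (psi x)) (snd (psi y)) + m' (snd (psi x)) (fst (psi y)))"
proof -
  let ?a1 = "fst (psi x)" and ?a2 = "snd (psi x)" and ?b1 = "fst (psi y)" and ?b2 = "snd (psi y)"
  have S1: "m' ?a1 ?b1 - m' ?a2 ?b2 \<in> S"
    by (rule subspace_diff[OF subS m'_S[OF psi_S(1) psi_S(1)] m'_S[OF psi_S(2) psi_S(2)]])
  have S2: "m' ?a1 ?b2 + m' ?a2 ?b1 \<in> S"
    by (rule subspace_add[OF subS m'_S[OF psi_S(1) psi_S(2)] m'_S[OF psi_S(2) psi_S(1)]])
  have Dm: "D (m x y) = (m' ?a1 ?b1 - m' ?a2 ?b2) + J (m' ?a1 ?b2 + m' ?a2 ?b1)"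
    unfolding m'_D by (subst psi_dec, subst psi_dec, rule m'_expand)
  have "psinv (m' ?a1 ?b1 - m' ?a2 ?b2, m' ?a1 ?b2 + m' ?a2 ?b1) = Di (D (m x y))"
    unfolding psinv_def Dm by simp
  then have "m x y = psinv (m' ?a1 ?b1 - m' ?a2 ?b2, m' ?a1 ?b2 + m' ?a2 ?b1)" by simp
  then show ?thesis using psi_psinv[OF S1 S2] by simp
qed

lemma psi_iso: "complexification_iso J m S m' psi"
  unfolding complexification_iso_def
proof (intro conjI allI)
  show "bij_betw psi UNIV (S \<times> S)"
    unfolding bij_betw_def
  proof
    show "inj psi" using psi_inj by (rule injI)
    show "range psi = S \<times> S"
    proof
      show "range psi \<subseteq> S \<times> S" using psi_S by (simp add: image_subset_iff mem_Times_iff)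
      show "S \<times> S \<subseteq> range psi"
      proof
        fix p assume "p \<in> S \<times> S"
        then obtain a b where "p = (a, b)" "a \<in> S" "b \<in> S" by auto
        then show "p \<in> range psi" using psi_psinv by (metis rangeI)
      qed
    qed
  qed
qed (simp_all add: psi_add psi_scale psi_J psi_m)

lemma ralgS: "ralg S m'"
  unfolding ralg_def using subS m'_S
  by (simp add: linear_add[OF linm'r] linear_add[OF linm'l] linear_scale[OF linm'r] linear_scale[OF linm'l])

lemma psinv_add: "psinv (a + a', b + b') = psinv (a, b) + psinv (a', b')"
  by (simp add: psinv_def Jadd linear_add[OF linDi] algebra_simps)
lemma psinv_scale: "psinv (r *\<^sub>R a, r *\<^sub>R b) = r *\<^sub>R psinv (a, b)"
  by (simp add: psinv_def Jscale linear_scale[OF linDi] scaleR_add_right[symmetric])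

lemma rsimpleS: "rsimple S m'"
  unfolding rsimple_def
proof (intro conjI allI impI)
  show "\<exists>x\<in>S. \<exists>y\<in>S. m' x y \<noteq> 0"
  proof (rule ccontr)
    assume "\<not> ?thesis"
    then have z: "\<And>x y. x \<in> S \<Longrightarrow> y \<in> S \<Longrightarrow> m' x y = 0" by blast
    have "psi (m x y) = psi 0" for x y using psi_S by (simp add: psi_m z psi_0)
    then have "m x y = 0" for x y using psi_inj by blast
    then show False using nontriv by blast
  qed
next
  fix I assume I: "rideal S m' I"
  have sI: "subspace I" and IS: "I \<subseteq> S" and idl: "\<And>x y. x \<in> S \<Longrightarrow> y \<in> I \<Longrightarrow> m' x y \<in> I \<and> m' y x \<in> I"
    using I by (auto simp: rideal_def)
  define I' where "I' = {x. fst (psi x) \<in> I \<and> snd (psi x) \<in> I}"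
  have lf: "linear (\<lambda>x. fst (psi x))" by (intro linearI) (simp_all add: psi_add psi_scale)
  have ls: "linear (\<lambda>x. snd (psi x))" by (intro linearI) (simp_all add: psi_add psi_scale)
  have sI': "subspace I'" unfolding I'_def
    using subspace_inter[OF lin_preimage[OF lf sI] lin_preimage[OF ls sI]] by (simp add: Collect_conj_eq)
  have "cideal J m I'" unfolding cideal_def rideal_def
  proof (intro conjI ballI subsetI)
    show "subspace I'" by fact
  next
    fix x y assume y: "y \<in> I'"
    then have y12: "fst (psi y) \<in> I" "snd (psi y) \<in> I" by (auto simp: I'_def)
    have x12: "fst (psi x) \<in> S" "snd (psi x) \<in> S" by (rule psi_S)+
    show "m x y \<in> I'" unfolding I'_def
      using idl[OF x12(1) y12(1)] idl[OF x12(1) y12(2)] idl[OF x12(2) y12(1)] idl[OF x12(2) y12(2)]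
      by (simp add: psi_m subspace_diff[OF sI] subspace_add[OF sI])
    show "m y x \<in> I'" unfolding I'_def
      using idl[OF x12(1) y12(1)] idl[OF x12(1) y12(2)] idl[OF x12(2) y12(1)] idl[OF x12(2) y12(2)]
      by (simp add: psi_m subspace_diff[OF sI] subspace_add[OF sI])
  next
    fix x assume "x \<in> J ` I'"
    then show "x \<in> I'" unfolding I'_def by (auto simp: psi_J subspace_neg[OF sI])
  qed simp
  then have "I' = {0} \<or> I' = UNIV" by (rule csimp)
  have 0: "0 \<in> S" "0 \<in> I" using subspace_0[OF subS] subspace_0[OF sI] by auto
  then show "I = {0} \<or> I = S"
  proof (cases "I' = UNIV")
    case True
    have "S \<subseteq> I"
    proof
      fix a assume a: "a \<in> S"
      have "psinv (a, 0) \<in> I'" using True by simp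
      then show "a \<in> I" using psi_psinv[OF a 0(1)] by (simp add: I'_def)
    qed
    then show ?thesis using IS by blast
  next
    case False
    then have I'0: "I' = {0}" using \<open>I' = {0} \<or> I' = UNIV\<close> by blast
    have "I \<subseteq> {0}"
    proof
      fix a assume a: "a \<in> I"
      have "psinv (a, 0) \<in> I'" using psi_psinv[of a 0] a IS 0 by (auto simp: I'_def)
      then have "psinv (a, 0) = 0" using I'0 by blast
      then have "psi (psinv (a, 0)) = (0, 0)" using psi_0 by simp
      then show "a \<in> {0}" using psi_psinv[of a 0] a IS 0 by auto
    qed
    then show ?thesis using 0 by blast
  qed
qed

lemma centS: "c \<in> rcentroid S m' \<Longrightarrow> \<exists>r. \<forall>x\<in>S. c x = r *\<^sub>R x"
proof -
  assume c: "c \<in> rcentroid S m'"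
  have cS: "\<And>x. x \<in> S \<Longrightarrow> c x \<in> S" and cadd: "\<And>x y. x \<in> S \<Longrightarrow> y \<in> S \<Longrightarrow> c (x + y) = c x + c y"
    and cscale: "\<And>r x. x \<in> S \<Longrightarrow> c (r *\<^sub>R x) = r *\<^sub>R c x"
    and cm1: "\<And>x y. x \<in> S \<Longrightarrow> y \<in> S \<Longrightarrow> c (m' x y) = m' (c x) y"
    and cm2: "\<And>x y. x \<in> S \<Longrightarrow> y \<in> S \<Longrightarrow> c (m' x y) = m' x (c y)"
    using c unfolding rcentroid_def lin_on_def by blast+
  have cneg: "c (- x) = - c x" if "x \<in> S" for x using cscale[OF that, of "-1"] by simp
  have cdiff: "c (x - y) = c x - c y" if "x \<in> S" "y \<in> S" for x y
    using cadd[OF that(1) subspace_neg[OF subS that(2)]] cneg[OF that(2)] by simp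
  define ch where "ch x = psinv (c (fst (psi x)), c (snd (psi x)))" for x
  have psi_ch: "psi (ch x) = (c (fst (psi x)), c (snd (psi x)))" for x
    unfolding ch_def by (rule psi_psinv) (simp_all add: cS psi_S)
  have "ch \<in> ccentroid J m"
    unfolding ccentroid_def
  proof (intro CollectI conjI allI)
    show "linear ch"
    proof (rule linearI)
      fix x y show "ch (x + y) = ch x + ch y"
        by (rule psi_inj) (simp add: psi_ch psi_add cadd psi_S)
    next
      fix r x show "ch (r *\<^sub>R x) = r *\<^sub>R ch x"
        by (rule psi_inj) (simp add: psi_ch psi_scale cscale psi_S)
    qed
  next
    fix x show "ch (J x) = J (ch x)"
      by (rule psi_inj) (simp add: psi_ch psi_J cneg psi_S)
  next
    fix x y
    have S1: "fst (psi x) \<in> S" "snd (psi x) \<in> S" "fst (psi y) \<in> S" "snd (psi y) \<in> S" by (simp_all add: psi_S)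
    show "ch (m x y) = m (ch x) y"
      by (rule psi_inj) (simp add: psi_ch psi_m cdiff cadd m'_S S1 cm1)
    show "ch (m x y) = m x (ch y)"
      by (rule psi_inj) (simp add: psi_ch psi_m cdiff cadd m'_S S1 cm2)
  qed
  then obtain a b where ab: "ch = (\<lambda>x. a *\<^sub>R x + b *\<^sub>R J x)" using ccent by blast
  show ?thesis
  proof (intro exI ballI)
    fix x assume x: "x \<in> S"
    have 0: "0 \<in> S" using subspace_0[OF subS] .
    have c0: "c 0 = 0" using cscale[OF 0, of 0] by simp
    have p: "psi (psinv (x, 0)) = (x, 0)" by (rule psi_psinv[OF x 0])
    have "psi (ch (psinv (x, 0))) = (c x, 0)" using psi_ch[of "psinv (x, 0)"] p c0 by simp
    moreover have "psi (ch (psinv (x, 0))) = (a *\<^sub>R x, b *\<^sub>R x)"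
      using p by (simp add: ab psi_add psi_scale psi_J)
    ultimately show "c x = a *\<^sub>R x" by simp
  qed
qed

lemma rcsS: "rcentral_simple S m'"
  unfolding rcentral_simple_def using ralgS rsimpleS centS by blast


lemma setadd_coset: "setadd (coset h a) (coset h b) = coset h (a + b)"
proof -
  have "setadd (coset h a) (coset h b) = {a + b, a + (b + h), (a + h) + b, (a + h) + (b + h)}"
    unfolding setadd_def coset_def by blast
  moreover have "a + (b + h) = a + b + h" by (simp add: add.assoc)
  moreover have "(a + h) + b = a + b + h" by (simp add: add_ac)
  moreover have "(a + h) + (b + h) = a + b" by (metis add.assoc add.commute ghh)
  ultimately show ?thesis unfolding coset_def by auto
qed

lemma coset_inj_rep: assumes "rep a = a" "rep b = b" "coset h a = coset h b" shows "a = b"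
proof -
  have "b = a \<or> b = a + h" using assms(3) coset_eq by blast
  then show ?thesis
  proof
    assume "b = a + h" then have "rep b = rep a" by simp
    then show ?thesis using assms(1,2) by simp
  qed simp
qed

lemma grS: "grading S m' (range (coset h)) setadd W"
  unfolding grading_def
proof (intro conjI ballI)
  fix i assume "i \<in> range (coset h)"
  then obtain g where i: "i = coset h g" by blast
  show "subspace (W i)" using i Vsub by simp
  show "W i \<subseteq> S" using i V_rep_S by auto
next
  fix i j x y assume "i \<in> range (coset h)" "j \<in> range (coset h)" "x \<in> W i" "y \<in> W j"
  then obtain g1 g2 where ij: "i = coset h g1" "j = coset h g2" and x: "x \<in> V (rep g1)" and y: "y \<in> V (rep g2)"
    by auto
  have "m' x y \<in> V (rep (rep g1 + rep g2))" using m'_rep[OF x _ y] by simp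
  then show "m' x y \<in> W (setadd i j)" using ij by (simp add: setadd_coset rep_add)
next
  fix x assume x: "x \<in> S"
  let ?R = "range (coset h)"
  let ?ok = "\<lambda>f. (\<forall>i. i \<notin> ?R \<longrightarrow> f i = 0) \<and> (\<forall>i\<in>?R. f i \<in> W i) \<and> finite {i. f i \<noteq> 0}
              \<and> x = (\<Sum>i\<in>{i. f i \<noteq> 0}. f i)"
  define f where "f C = (if C \<in> ?R then P x (SOME k. k \<in> C) else 0)" for C
  have fc: "f (coset h g) = P x (rep g)" for g by (simp add: f_def rep_def)
  let ?T = "{g. P x g \<noteq> 0}"
  have Trep: "g \<in> ?T \<Longrightarrow> rep g = g" for g using x S_iff by auto
  have suppf: "{C. f C \<noteq> 0} = coset h ` ?T"
  proof
    show "{C. f C \<noteq> 0} \<subseteq> coset h ` ?T"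
    proof
      fix C assume "C \<in> {C. f C \<noteq> 0}"
      then obtain g where C: "C = coset h g" and "P x (rep g) \<noteq> 0" by (auto simp: f_def rep_def split: if_splits)
      then have "rep g \<in> ?T" "C = coset h (rep g)" using rep_coset[of g] by auto
      then show "C \<in> coset h ` ?T" by blast
    qed
    show "coset h ` ?T \<subseteq> {C. f C \<noteq> 0}" using Trep fc by auto
  qed
  have injT: "inj_on (coset h) ?T"
  proof (rule inj_onI)
    fix a b assume "a \<in> ?T" "b \<in> ?T" "coset h a = coset h b"
    then show "a = b" using coset_inj_rep Trep by blast
  qed
  have okf: "?ok f"
  proof (intro conjI allI impI ballI)
    show "\<And>i. i \<notin> ?R \<Longrightarrow> f i = 0" by (simp add: f_def)
    show "\<And>i. i \<in> ?R \<Longrightarrow> f i \<in> W i" by (auto simp: fc)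
    show "finite {i. f i \<noteq> 0}" using suppf by simp
    have "(\<Sum>i\<in>{i. f i \<noteq> 0}. f i) = (\<Sum>g\<in>?T. f (coset h g))"
      unfolding suppf by (rule sum.reindex[OF injT, unfolded o_def])
    also have "\<dots> = (\<Sum>g\<in>?T. P x g)" using Trep by (simp add: fc)
    also have "\<dots> = x" using P_sum[of x] by simp
    finally show "x = (\<Sum>i\<in>{i. f i \<noteq> 0}. f i)" by simp
  qed
  have uniq: "f' = f" if ok: "?ok f'" for f'
  proof -
    have f'0: "\<And>i. i \<notin> ?R \<Longrightarrow> f' i = 0" and f'W: "\<And>g. f' (coset h g) \<in> V (rep g)"
      and f'fin: "finite {i. f' i \<noteq> 0}" and f'sum: "x = (\<Sum>i\<in>{i. f' i \<noteq> 0}. f' i)"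
      using ok by auto
    define F where "F g = (if rep g = g then f' (coset h g) else 0)" for g
    let ?T' = "{g. rep g = g \<and> f' (coset h g) \<noteq> 0}"
    have injT': "inj_on (coset h) ?T'"
    proof (rule inj_onI)
      fix a b assume "a \<in> ?T'" "b \<in> ?T'" "coset h a = coset h b"
      then show "a = b" using coset_inj_rep by blast
    qed
    have supp': "{i. f' i \<noteq> 0} = coset h ` ?T'"
    proof
      show "{i. f' i \<noteq> 0} \<subseteq> coset h ` ?T'"
      proof
        fix C assume C: "C \<in> {i. f' i \<noteq> 0}"
        then have "C \<in> ?R" using f'0 by blast
        then obtain g where "C = coset h g" by blast
        then have Cr: "C = coset h (rep g)" by (simp add: rep_coset)
        then have "rep g \<in> ?T'" using C by simp
        then show "C \<in> coset h ` ?T'" using Cr by blast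
      qed
    qed auto
    have finT': "finite ?T'" using f'fin supp' finite_image_iff[OF injT'] by simp
    have FV: "F g \<in> V g" for g using f'W[of g] by (auto simp: F_def V0)
    have "x = (\<Sum>g\<in>?T'. f' (coset h g))"
      using f'sum unfolding supp' by (simp add: sum.reindex[OF injT'])
    also have "\<dots> = sum F ?T'" by (simp add: F_def)
    finally have "P x = F" by (intro P_unique[OF FV finT']) (auto simp: F_def)
    show "f' = f"
    proof
      fix C show "f' C = f C"
      proof (cases "C \<in> ?R")
        case False then show ?thesis using f'0 by (simp add: f_def)
      next
        case True
        then obtain g where C: "C = coset h g" by blast
        have "f C = P x (rep g)" using C fc by simp
        also have "\<dots> = F (rep g)" using \<open>P x = F\<close> by simp
        also have "\<dots> = f' (coset h (rep g))" by (simp add: F_def)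
        also have "\<dots> = f' C" using C by (simp add: rep_coset)
        finally show ?thesis by simp
      qed
    qed
  qed
  show "\<exists>!f. ?ok f" by (rule ex1I[where P="?ok" and a=f, OF okf uniq])
qed

end

theorem mainTheorem8:
  fixes J :: "'b::real_vector \<Rightarrow> 'b" and m :: "'b \<Rightarrow> 'b \<Rightarrow> 'b"
    and V :: "'g::ab_group_add \<Rightarrow> 'b set"
  assumes B: "ccentral_simple J m"
    and Gamma: "grading UNIV m UNIV (+) V"
  shows "(rcentroid UNIV m = cent_comp m V 0 \<and> (\<forall>g. J ` V g \<subseteq> V g))
    \<or> (\<exists>h. h \<noteq> 0 \<and> h + h = 0
         \<and> cent_comp m V 0 = {(\<lambda>x. r *\<^sub>R x) | r. True}
         \<and> cent_comp m V h = {(\<lambda>x. r *\<^sub>R J x) | r. True}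
         \<and> graded_central_simple m V
         \<and> (\<exists>S m' W \<tau> \<phi> \<psi>. rcentral_simple S m'
              \<and> grading S m' (range (coset h)) setadd W
              \<and> sym_cocycle \<tau>
              \<and> graded_iso_loop m V h m' W \<tau> \<phi>
              \<and> complexification_iso J m S m' \<psi>))"
proof -
  interpret gr J m V by unfold_locales (rule B, rule Gamma)
  show ?thesis
  proof (cases "\<forall>g. J ` V g \<subseteq> V g")
    case True
    then show ?thesis using case1 by blast
  next
    case False
    then obtain h where h0: "h \<noteq> 0" and hh: "h + h = 0" and JVh: "\<forall>g y. y \<in> V g \<longrightarrow> J y \<in> V (g + h)"
      using dich by blast
    interpret g2: gr2 J m V h by unfold_locales (use h0 hh JVh in auto)
    have "\<exists>S m' W \<tau> \<phi> \<psi>. rcentral_simple S m'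
              \<and> grading S m' (range (coset h)) setadd W
              \<and> sym_cocycle \<tau>
              \<and> graded_iso_loop m V h m' W \<tau> \<phi>
              \<and> complexification_iso J m S m' \<psi>"
      using g2.rcsS g2.grS g2.sym_tau g2.phi_iso g2.psi_iso by blast
    then show ?thesis using h0 hh g2.cent0 g2.centh g2.gcs by blast
  qed
qed

end
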